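(* Let $m$ be a positive integer and $0\le r\le n$ an integer with $\sigma(m-r)\le n$. Let $v=(v_1,\dots,v_n)$ and let $V\in\mathcal{S}^{m-r}\mathbb{R}[v]$ be the symmetric matrix whose upper triangular part is filled row by row with $v_1,\dots,v_{\sigma(m-r)}$ (first row $v_1,\dots,v_{m-r}$, second row from the diagonal $v_{m-r+1},\dots,v_{2(m-r)-1}$, etc.). Suppose a formal power series $f\in\mathbb{R}[[v_1,\dots,v_n]]$ admits an expansion $$f=\langle C,V\rangle+f_2(v)+\sum_{i=3}^\infty f_i,$$ where $C\in\mathcal{S}^{m-r}$ is positive definite, $f_2$ is a quadratic form such that $f_2(0,\dots,0,v_{\sigma(m-r)+1},\dots,v_n)$ is positive definite in $v_{\sigma(m-r)+1},\dots,v_n$, and $f_i$ is the degree-$i$ homogeneous part of $f$. Then $f$ lies in the quadratic module of $\mathbb{R}[[v]]$ generated by the image of $\mathrm{QM}[V]$, i.e., $f\in\widehat{\mathrm{QM}[V]}_0$.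
   Context: $\sigma(d)=d(d+1)/2$. $\langle W,Y\rangle=\mathrm{tr}(WY^T)$. $\mathrm{QM}[V]=\{\sigma+\sum_{t=1}^s w_t^TVw_t:\sigma\text{ a sum of squares in }\mathbb{R}[v],\ w_t\in\mathbb{R}[v]^{m-r},\ s\in\mathbb{N}\}$. $\widehat{\mathrm{QM}[V]}_0$ denotes the quadratic module in the formal power series ring $\mathbb{R}[[v]]$ (the completion of the localization of $\mathbb{R}[v]$ at $0$) generated by the image of $\mathrm{QM}[V]$ under the natural embedding, i.e., the set of finite sums $\sum_j s_jq_j$ with $s_j$ sums of squares in $\mathbb{R}[[v]]$ and $q_j\in\mathrm{QM}[V]$. *)

theory Defs
  imports Complex_Main "HOL-Library.Poly_Mapping"
begin

text \<open>Formal power series in the variables v_1,...,v_n over the reals are modelled as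
  coefficient functions on monomials (finitely supported exponent vectors).
  Variable v_(k+1) has index k (0-based).\<close>

type_synonym mon = "nat \<Rightarrow>\<^sub>0 nat"
type_synonym fps = "mon \<Rightarrow> real"

definition in_vars :: "nat \<Rightarrow> fps \<Rightarrow> bool" where
  "in_vars n f \<longleftrightarrow> (\<forall>\<alpha>. f \<alpha> \<noteq> 0 \<longrightarrow> Poly_Mapping.keys \<alpha> \<subseteq> {..<n})"

definition is_poly :: "nat \<Rightarrow> fps \<Rightarrow> bool" where
  "is_poly n p \<longleftrightarrow> in_vars n p \<and> finite {\<alpha>. p \<alpha> \<noteq> 0}"

definition fps_mult :: "fps \<Rightarrow> fps \<Rightarrow> fps" where
  "fps_mult f g = (\<lambda>\<alpha>. \<Sum>p\<in>{(\<beta>, \<gamma>). \<beta> + \<gamma> = \<alpha>}. f (fst p) * g (snd p))"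

definition mdeg :: "mon \<Rightarrow> nat" where
  "mdeg \<alpha> = (\<Sum>i\<in>Poly_Mapping.keys \<alpha>. Poly_Mapping.lookup \<alpha> i)"

definition hom_part :: "nat \<Rightarrow> fps \<Rightarrow> fps" where
  "hom_part i f = (\<lambda>\<alpha>. if mdeg \<alpha> = i then f \<alpha> else 0)"

definition var :: "nat \<Rightarrow> fps" where
  "var k = (\<lambda>\<alpha>. if \<alpha> = Poly_Mapping.single k 1 then 1 else 0)"

definition peval :: "fps \<Rightarrow> (nat \<Rightarrow> real) \<Rightarrow> real" where
  "peval p x = (\<Sum>\<alpha>\<in>{\<alpha>. p \<alpha> \<noteq> 0}. p \<alpha> * (\<Prod>i\<in>Poly_Mapping.keys \<alpha>. x i ^ Poly_Mapping.lookup \<alpha> i))"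

definition sigma :: "nat \<Rightarrow> nat" where
  "sigma d = d * (d + 1) div 2"

text \<open>Index (0-based) of the variable in entry (i,j), i \<le> j, of the d x d symmetric matrix V
  whose upper triangular part is filled row by row: row i (0-based) starts at
  (\<Sum>k<i. d - k) and its entries are (i,i),(i,i+1),...,(i,d-1).\<close>
definition vidx :: "nat \<Rightarrow> nat \<Rightarrow> nat \<Rightarrow> nat" where
  "vidx d i j = (if i \<le> j then (\<Sum>k<i. d - k) + (j - i) else (\<Sum>k<j. d - k) + (i - j))"

definition Vmat :: "nat \<Rightarrow> nat \<Rightarrow> nat \<Rightarrow> fps" where
  "Vmat d i j = var (vidx d i j)"

definition pos_def :: "nat \<Rightarrow> (nat \<Rightarrow> nat \<Rightarrow> real) \<Rightarrow> bool" where
  "pos_def d C \<longleftrightarrow> (\<forall>i<d. \<forall>j<d. C i j = C j i) \<and>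
     (\<forall>x::nat \<Rightarrow> real. (\<exists>i<d. x i \<noteq> 0) \<longrightarrow> (\<Sum>i<d. \<Sum>j<d. x i * C i j * x j) > 0)"

definition inner_CV :: "nat \<Rightarrow> (nat \<Rightarrow> nat \<Rightarrow> real) \<Rightarrow> fps" where
  "inner_CV d C = (\<lambda>\<alpha>. \<Sum>i<d. \<Sum>j<d. C i j * Vmat d i j \<alpha>)"

definition sos_poly :: "nat \<Rightarrow> fps \<Rightarrow> bool" where
  "sos_poly n s \<longleftrightarrow> (\<exists>(K::nat) p. (\<forall>k<K. is_poly n (p k)) \<and>
      s = (\<lambda>\<alpha>. \<Sum>k<K. fps_mult (p k) (p k) \<alpha>))"

definition sos_fps :: "nat \<Rightarrow> fps \<Rightarrow> bool" where
  "sos_fps n s \<longleftrightarrow> (\<exists>(K::nat) g. (\<forall>k<K. in_vars n (g k)) \<and>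
      s = (\<lambda>\<alpha>. \<Sum>k<K. fps_mult (g k) (g k) \<alpha>))"

definition QM :: "nat \<Rightarrow> nat \<Rightarrow> fps set" where
  "QM n d = {q. \<exists>\<sigma> (s::nat) w. sos_poly n \<sigma> \<and> (\<forall>t<s. \<forall>i<d. is_poly n (w t i)) \<and>
      q = (\<lambda>\<alpha>. \<sigma> \<alpha> + (\<Sum>t<s. \<Sum>i<d. \<Sum>j<d.
                 fps_mult (w t i) (fps_mult (Vmat d i j) (w t j)) \<alpha>))}"

definition QM_hat :: "nat \<Rightarrow> nat \<Rightarrow> fps set" where
  "QM_hat n d = {f. \<exists>(J::nat) s q. (\<forall>j<J. sos_fps n (s j) \<and> q j \<in> QM n d) \<and>
      f = (\<lambda>\<alpha>. \<Sum>j<J. fps_mult (s j) (q j) \<alpha>)}"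

end

theory Submission
  imports Defs "HOL-Analysis.Convex"
begin

abbreviation e1 :: "nat \<Rightarrow> mon" where "e1 k \<equiv> Poly_Mapping.single k (Suc 0)"

definition dset :: "mon \<Rightarrow> (mon \<times> mon) set" where
  "dset \<alpha> = {(\<beta>, \<gamma>). \<beta> + \<gamma> = \<alpha>}"

lemma finite_below: "finite {\<beta>::mon. \<forall>i. Poly_Mapping.lookup \<beta> i \<le> Poly_Mapping.lookup \<alpha> i}"
proof -
  let ?A = "Poly_Mapping.keys \<alpha>" and ?B = "{..Max (insert 0 (Poly_Mapping.lookup \<alpha> ` Poly_Mapping.keys \<alpha>))}"
  have fin: "finite {g::nat\<Rightarrow>nat. \<forall>x. (x \<in> ?A \<longrightarrow> g x \<in> ?B) \<and> (x \<notin> ?A \<longrightarrow> g x = 0)}"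
    by (rule finite_set_of_finite_funs) auto
  have "Poly_Mapping.lookup ` {\<beta>::mon. \<forall>i. Poly_Mapping.lookup \<beta> i \<le> Poly_Mapping.lookup \<alpha> i} \<subseteq> {g::nat\<Rightarrow>nat. \<forall>x. (x \<in> ?A \<longrightarrow> g x \<in> ?B) \<and> (x \<notin> ?A \<longrightarrow> g x = 0)}"
  proof clarify
    fix \<beta> :: mon and x
    assume h: "\<forall>i. Poly_Mapping.lookup \<beta> i \<le> Poly_Mapping.lookup \<alpha> i"
    show "(x \<in> ?A \<longrightarrow> Poly_Mapping.lookup \<beta> x \<in> ?B) \<and> (x \<notin> ?A \<longrightarrow> Poly_Mapping.lookup \<beta> x = 0)"
    proof (intro conjI impI)
      assume "x \<in> ?A"
      then have "Poly_Mapping.lookup \<alpha> x \<le> Max (insert 0 (Poly_Mapping.lookup \<alpha> ` Poly_Mapping.keys \<alpha>))"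
        by (intro Max_ge) auto
      then show "Poly_Mapping.lookup \<beta> x \<in> ?B" using h[rule_format, of x] by auto
    next
      assume "x \<notin> ?A"
      then show "Poly_Mapping.lookup \<beta> x = 0" using h[rule_format, of x] by (simp add: in_keys_iff)
    qed
  qed
  moreover have "inj_on Poly_Mapping.lookup {\<beta>::mon. \<forall>i. Poly_Mapping.lookup \<beta> i \<le> Poly_Mapping.lookup \<alpha> i}"
    by (simp add: inj_on_def poly_mapping_eqI)
  ultimately show ?thesis using fin finite_imageD finite_subset by blast
qed

lemma finite_dset: "finite (dset \<alpha>)"
proof -
  have "dset \<alpha> \<subseteq> (\<lambda>\<beta>. (\<beta>, \<alpha> - \<beta>)) ` {\<beta>::mon. \<forall>i. Poly_Mapping.lookup \<beta> i \<le> Poly_Mapping.lookup \<alpha> i}"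
  proof clarify
    fix \<beta> \<gamma> assume "(\<beta>, \<gamma>) \<in> dset \<alpha>"
    then have e: "\<beta> + \<gamma> = \<alpha>" by (simp add: dset_def)
    then have "\<gamma> = \<alpha> - \<beta>" by auto
    moreover have "\<forall>i. Poly_Mapping.lookup \<beta> i \<le> Poly_Mapping.lookup \<alpha> i" using e by (auto simp: lookup_add)
    ultimately show "(\<beta>, \<gamma>) \<in> (\<lambda>\<beta>. (\<beta>, \<alpha> - \<beta>)) ` {\<beta>::mon. \<forall>i. Poly_Mapping.lookup \<beta> i \<le> Poly_Mapping.lookup \<alpha> i}" by auto
  qed
  then show ?thesis using finite_below finite_subset by blast
qed

lemma fps_mult_dset: "fps_mult f g \<alpha> = (\<Sum>p\<in>dset \<alpha>. f (fst p) * g (snd p))"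
  by (simp add: fps_mult_def dset_def)

lemma fps_mult_comm: "fps_mult f g = fps_mult g f"
proof
  fix \<alpha>
  show "fps_mult f g \<alpha> = fps_mult g f \<alpha>"
    unfolding fps_mult_dset
    by (rule sum.reindex_bij_witness[where i="\<lambda>(a,b). (b,a)" and j="\<lambda>(a,b). (b,a)"])
       (auto simp: dset_def add.commute)
qed

lemma fps_mult_assoc: "fps_mult (fps_mult f g) h = fps_mult f (fps_mult g h)"
proof
  fix \<alpha>
  have "fps_mult (fps_mult f g) h \<alpha> = (\<Sum>p\<in>dset \<alpha>. \<Sum>q\<in>dset (fst p). f (fst q) * g (snd q) * h (snd p))"
    unfolding fps_mult_dset by (simp add: sum_distrib_right)
  also have "\<dots> = (\<Sum>x\<in>Sigma (dset \<alpha>) (\<lambda>p. dset (fst p)). f (fst (snd x)) * g (snd (snd x)) * h (snd (fst x)))"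
    by (subst sum.Sigma) (simp_all add: finite_dset split_beta)
  also have "\<dots> = (\<Sum>x\<in>Sigma (dset \<alpha>) (\<lambda>p. dset (snd p)). f (fst (fst x)) * (g (fst (snd x)) * h (snd (snd x))))"
    by (rule sum.reindex_bij_witness[where i="\<lambda>((a,r),(b,q)). ((a+b,q),(a,b))" and j="\<lambda>((p,q),(a,b)). ((a,b+q),(b,q))"])
       (auto simp: dset_def add.assoc)
  also have "\<dots> = (\<Sum>p\<in>dset \<alpha>. \<Sum>q\<in>dset (snd p). f (fst p) * (g (fst q) * h (snd q)))"
    by (subst sum.Sigma) (simp_all add: finite_dset split_beta)
  also have "\<dots> = fps_mult f (fps_mult g h) \<alpha>"
    unfolding fps_mult_dset by (simp add: sum_distrib_left)
  finally show "fps_mult (fps_mult f g) h \<alpha> = fps_mult f (fps_mult g h) \<alpha>" .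
qed

lemma fps_mult_one: "fps_mult (\<lambda>\<alpha>. if \<alpha> = 0 then 1 else 0) g = g"
proof
  fix \<alpha>
  have "fps_mult (\<lambda>\<alpha>. if \<alpha> = 0 then 1 else 0) g \<alpha> = (\<Sum>p\<in>dset \<alpha>. if p = (0, \<alpha>) then g \<alpha> else 0)"
    unfolding fps_mult_dset by (rule sum.cong) (auto simp: dset_def)
  also have "\<dots> = g \<alpha>"
    using sum.delta[OF finite_dset, of "(0, \<alpha>)" "\<lambda>_. g \<alpha>" \<alpha>] by (simp add: dset_def)
  finally show "fps_mult (\<lambda>\<alpha>. if \<alpha> = 0 then 1 else 0) g \<alpha> = g \<alpha>" .
qed

lemma fps_mult_distrib: "fps_mult (\<lambda>\<alpha>. f \<alpha> + g \<alpha>) h = (\<lambda>\<alpha>. fps_mult f h \<alpha> + fps_mult g h \<alpha>)"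
  unfolding fps_mult_dset by (auto simp: algebra_simps sum.distrib)

typedef ps = "UNIV :: fps set" by auto
setup_lifting type_definition_ps

instantiation ps :: comm_ring_1
begin
lift_definition zero_ps :: ps is "\<lambda>_. 0" .
lift_definition one_ps :: ps is "\<lambda>\<alpha>. if \<alpha> = 0 then 1 else 0" .
lift_definition plus_ps :: "ps \<Rightarrow> ps \<Rightarrow> ps" is "\<lambda>f g \<alpha>. f \<alpha> + g \<alpha>" .
lift_definition minus_ps :: "ps \<Rightarrow> ps \<Rightarrow> ps" is "\<lambda>f g \<alpha>. f \<alpha> - g \<alpha>" .
lift_definition uminus_ps :: "ps \<Rightarrow> ps" is "\<lambda>f \<alpha>. - f \<alpha>" .
lift_definition times_ps :: "ps \<Rightarrow> ps \<Rightarrow> ps" is fps_mult .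
instance
proof
  fix a b c :: ps
  show "a * b * c = a * (b * c)" by transfer (rule fps_mult_assoc)
  show "a * b = b * a" by transfer (rule fps_mult_comm)
  show "1 * a = a" by transfer (rule fps_mult_one)
  show "(a + b) * c = a * c + b * c" by transfer (rule fps_mult_distrib)
  show "a + b + c = a + (b + c)" by transfer (simp add: add.assoc)
  show "a + b = b + a" by transfer (simp add: add.commute)
  show "0 + a = a" by transfer simp
  show "- a + a = 0" by transfer simp
  show "a - b = a + - b" by transfer simp
  show "(0::ps) \<noteq> 1" by transfer (metis zero_neq_one)
qed
end

lemma Rep_add[simp]: "Rep_ps (a + b) \<alpha> = Rep_ps a \<alpha> + Rep_ps b \<alpha>" by transfer simp
lemma Rep_diff[simp]: "Rep_ps (a - b) \<alpha> = Rep_ps a \<alpha> - Rep_ps b \<alpha>" by transfer simp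
lemma Rep_uminus[simp]: "Rep_ps (- a) \<alpha> = - Rep_ps a \<alpha>" by transfer simp
lemma Rep_zero[simp]: "Rep_ps 0 \<alpha> = 0" by transfer simp
lemma Rep_one: "Rep_ps 1 \<alpha> = (if \<alpha> = 0 then 1 else 0)" by transfer simp
lemma Rep_mult: "Rep_ps (a * b) = fps_mult (Rep_ps a) (Rep_ps b)" by transfer simp
lemma Rep_sum: "Rep_ps (sum g S) \<alpha> = (\<Sum>x\<in>S. Rep_ps (g x) \<alpha>)"
  by (induction S rule: infinite_finite_induct) auto

lemma dset_0: "dset 0 = {(0, 0)}"
  by (auto simp: dset_def poly_mapping_eq_iff fun_eq_iff lookup_add)

lemma dset_fst0: "p \<in> dset \<alpha> \<Longrightarrow> fst p = 0 \<longleftrightarrow> p = (0, \<alpha>)"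
  by (auto simp: dset_def)
lemma dset_snd0: "p \<in> dset \<alpha> \<Longrightarrow> snd p = 0 \<longleftrightarrow> p = (\<alpha>, 0)"
  by (auto simp: dset_def)

lemma sum_dset_fst0: "(\<Sum>p\<in>dset \<alpha>. if fst p = 0 then g p else 0) = g (0, \<alpha>)"
proof -
  have "(\<Sum>p\<in>dset \<alpha>. if fst p = 0 then g p else 0) = (\<Sum>p\<in>dset \<alpha>. if p = (0, \<alpha>) then g p else 0)"
    by (rule sum.cong) (auto simp: dset_fst0)
  also have "\<dots> = g (0, \<alpha>)" using sum.delta[OF finite_dset, of "(0, \<alpha>)" g \<alpha>] by (simp add: dset_def)
  finally show ?thesis .
qed

lemma sum_dset_snd0: "(\<Sum>p\<in>dset \<alpha>. if snd p = 0 then g p else 0) = g (\<alpha>, 0)"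
proof -
  have "(\<Sum>p\<in>dset \<alpha>. if snd p = 0 then g p else 0) = (\<Sum>p\<in>dset \<alpha>. if p = (\<alpha>, 0) then g p else 0)"
    by (rule sum.cong) (auto simp: dset_snd0)
  also have "\<dots> = g (\<alpha>, 0)" using sum.delta[OF finite_dset, of "(\<alpha>, 0)" g \<alpha>] by (simp add: dset_def)
  finally show ?thesis .
qed

definition cst :: "real \<Rightarrow> ps" where "cst c = Abs_ps (\<lambda>\<alpha>. if \<alpha> = 0 then c else 0)"
definition ev :: "ps \<Rightarrow> real" where "ev a = Rep_ps a 0"
definition X :: "nat \<Rightarrow> ps" where "X k = Abs_ps (var k)"

lemma Rep_cst: "Rep_ps (cst c) \<alpha> = (if \<alpha> = 0 then c else 0)"
  by (simp add: cst_def Abs_ps_inverse)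

lemma Rep_cst_mult: "Rep_ps (cst c * a) \<alpha> = c * Rep_ps a \<alpha>"
proof -
  have "Rep_ps (cst c * a) \<alpha> = (\<Sum>p\<in>dset \<alpha>. if fst p = 0 then c * Rep_ps a (snd p) else 0)"
    by (simp add: Rep_mult fps_mult_dset Rep_cst) (rule sum.cong, auto)
  then show ?thesis by (simp add: sum_dset_fst0)
qed

lemma cst_0[simp]: "cst 0 = 0" by (simp add: cst_def zero_ps_def)
lemma cst_1[simp]: "cst 1 = 1" by (simp add: cst_def one_ps_def)
lemma cst_add: "cst (a + b) = cst a + cst b"
  by (rule Rep_ps_inject[THEN iffD1]) (auto simp: Rep_cst)
lemma cst_diff: "cst (a - b) = cst a - cst b"
  by (rule Rep_ps_inject[THEN iffD1]) (auto simp: Rep_cst)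
lemma cst_uminus: "cst (- a) = - cst a"
  by (rule Rep_ps_inject[THEN iffD1]) (auto simp: Rep_cst)
lemma cst_mult: "cst (a * b) = cst a * cst b"
  by (rule Rep_ps_inject[THEN iffD1]) (auto simp: Rep_cst_mult Rep_cst)

lemma ev_add[simp]: "ev (a + b) = ev a + ev b" by (simp add: ev_def)
lemma ev_diff[simp]: "ev (a - b) = ev a - ev b" by (simp add: ev_def)
lemma ev_uminus[simp]: "ev (- a) = - ev a" by (simp add: ev_def)
lemma ev_zero[simp]: "ev 0 = 0" by (simp add: ev_def)
lemma ev_one[simp]: "ev 1 = 1" by (simp add: ev_def Rep_one)
lemma ev_mult[simp]: "ev (a * b) = ev a * ev b" by (simp add: ev_def Rep_mult fps_mult_dset dset_0)
lemma ev_cst[simp]: "ev (cst c) = c" by (simp add: ev_def Rep_cst)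
lemma ev_sum: "ev (sum g S) = (\<Sum>x\<in>S. ev (g x))" by (simp add: ev_def Rep_sum)

lemma Rep_X_mult: "Rep_ps (X k * G) \<alpha> = (if Poly_Mapping.lookup \<alpha> k > 0 then Rep_ps G (\<alpha> - e1 k) else 0)"
proof -
  have "Rep_ps (X k * G) \<alpha> = (\<Sum>p\<in>dset \<alpha>. if fst p = e1 k then Rep_ps G (snd p) else 0)"
    by (simp add: X_def Rep_mult fps_mult_dset Abs_ps_inverse var_def) (rule sum.cong, auto)
  also have "\<dots> = (if Poly_Mapping.lookup \<alpha> k > 0 then Rep_ps G (\<alpha> - e1 k) else 0)"
  proof (cases "Poly_Mapping.lookup \<alpha> k > 0")
    case True
    then have eq: "e1 k + (\<alpha> - e1 k) = \<alpha>"
      by (intro poly_mapping_eqI) (auto simp: lookup_add lookup_minus lookup_single when_def)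
    have "(\<Sum>p\<in>dset \<alpha>. if fst p = e1 k then Rep_ps G (snd p) else 0)
        = (\<Sum>p\<in>dset \<alpha>. if p = (e1 k, \<alpha> - e1 k) then Rep_ps G (snd p) else 0)"
      by (rule sum.cong) (auto simp: dset_def)
    also have "\<dots> = Rep_ps G (\<alpha> - e1 k)"
      using sum.delta[OF finite_dset, of "(e1 k, \<alpha> - e1 k)" "\<lambda>p. Rep_ps G (snd p)" \<alpha>] eq
      by (simp add: dset_def)
    finally show ?thesis using True by simp
  next
    case False
    have "\<And>p. p \<in> dset \<alpha> \<Longrightarrow> fst p \<noteq> e1 k"
    proof
      fix p assume "p \<in> dset \<alpha>" "fst p = e1 k"
      then have "\<alpha> = e1 k + snd p" by (auto simp: dset_def)
      then have "Poly_Mapping.lookup \<alpha> k \<ge> 1" by (simp add: lookup_add)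
      then show False using False by simp
    qed
    then show ?thesis using False by (simp add: sum.neutral)
  qed
  finally show ?thesis .
qed

lemma mdeg_alt: "finite K \<Longrightarrow> Poly_Mapping.keys \<alpha> \<subseteq> K \<Longrightarrow> mdeg \<alpha> = (\<Sum>i\<in>K. Poly_Mapping.lookup \<alpha> i)"
  unfolding mdeg_def by (rule sum.mono_neutral_left) (auto simp: in_keys_iff)

lemma mdeg_add: "mdeg (\<beta> + \<gamma>) = mdeg \<beta> + mdeg \<gamma>"
proof -
  let ?K = "Poly_Mapping.keys \<beta> \<union> Poly_Mapping.keys \<gamma>"
  have "mdeg (\<beta> + \<gamma>) = (\<Sum>i\<in>?K. Poly_Mapping.lookup (\<beta> + \<gamma>) i)"
    by (rule mdeg_alt) (auto simp: in_keys_iff lookup_add)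
  also have "\<dots> = (\<Sum>i\<in>?K. Poly_Mapping.lookup \<beta> i) + (\<Sum>i\<in>?K. Poly_Mapping.lookup \<gamma> i)"
    by (simp add: lookup_add sum.distrib)
  also have "\<dots> = mdeg \<beta> + mdeg \<gamma>"
    by (subst (1 2) mdeg_alt[of ?K]) auto
  finally show ?thesis .
qed

lemma mdeg_0_iff: "mdeg \<alpha> = 0 \<longleftrightarrow> \<alpha> = 0"
proof
  assume "mdeg \<alpha> = 0"
  then have "\<forall>i\<in>Poly_Mapping.keys \<alpha>. Poly_Mapping.lookup \<alpha> i = 0"
    unfolding mdeg_def by (simp add: sum_eq_0_iff)
  then show "\<alpha> = 0" by (auto simp: in_keys_iff intro!: poly_mapping_eqI)
qed (simp add: mdeg_def)

lemma mdeg_single[simp]: "mdeg (Poly_Mapping.single k c) = c"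
  by (cases "c = 0") (auto simp: mdeg_def)

lemma dset_mdeg_snd: "p \<in> dset \<alpha> \<Longrightarrow> fst p \<noteq> 0 \<Longrightarrow> mdeg (snd p) < mdeg \<alpha>"
  by (auto simp: dset_def mdeg_add mdeg_0_iff[symmetric])
lemma dset_mdeg_fst: "p \<in> dset \<alpha> \<Longrightarrow> snd p \<noteq> 0 \<Longrightarrow> mdeg (fst p) < mdeg \<alpha>"
  by (auto simp: dset_def mdeg_add mdeg_0_iff[symmetric])

function pinv :: "fps \<Rightarrow> mon \<Rightarrow> real" where
  "pinv f \<alpha> = (if \<alpha> = 0 then 1 / f 0 else
     - (\<Sum>p\<in>dset \<alpha>. if fst p = 0 then 0 else f (fst p) * pinv f (snd p)) / f 0)"
  by auto
termination
  by (relation "measure (\<lambda>(f, \<alpha>). mdeg \<alpha>)") (auto intro: dset_mdeg_snd)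

declare pinv.simps[simp del]

function psqrt :: "fps \<Rightarrow> mon \<Rightarrow> real" where
  "psqrt h \<alpha> = (if \<alpha> = 0 then sqrt (h 0) else
     (h \<alpha> - (\<Sum>p\<in>dset \<alpha>. if fst p = 0 \<or> snd p = 0 then 0 else psqrt h (fst p) * psqrt h (snd p))) / (2 * sqrt (h 0)))"
  by auto
termination
  by (relation "measure (\<lambda>(f, \<alpha>). mdeg \<alpha>)") (auto intro: dset_mdeg_snd dset_mdeg_fst)

declare psqrt.simps[simp del]

lemma pinv_works:
  assumes "f 0 \<noteq> 0"
  shows "fps_mult f (pinv f) \<alpha> = (if \<alpha> = 0 then 1 else 0)"
proof (cases "\<alpha> = 0")
  case True
  then show ?thesis using assms by (simp add: fps_mult_dset dset_0 pinv.simps)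
next
  case False
  let ?g = "\<lambda>p. f (fst p) * pinv f (snd p)"
  have "fps_mult f (pinv f) \<alpha> = (\<Sum>p\<in>dset \<alpha>. if fst p = 0 then ?g p else 0) + (\<Sum>p\<in>dset \<alpha>. if fst p = 0 then 0 else ?g p)"
    unfolding fps_mult_dset sum.distrib[symmetric] by (rule sum.cong) auto
  also have "\<dots> = f 0 * pinv f \<alpha> + (\<Sum>p\<in>dset \<alpha>. if fst p = 0 then 0 else ?g p)"
    by (simp add: sum_dset_fst0)
  also have "\<dots> = 0"
    using assms False by (subst pinv.simps) simp
  finally show ?thesis using False by simp
qed

lemma psqrt_works:
  assumes "h 0 > 0"
  shows "fps_mult (psqrt h) (psqrt h) \<alpha> = h \<alpha>"
proof (cases "\<alpha> = 0")
  case True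
  then show ?thesis using assms by (simp add: fps_mult_dset dset_0 psqrt.simps)
next
  case False
  let ?g = "\<lambda>p. psqrt h (fst p) * psqrt h (snd p)"
  have "fps_mult (psqrt h) (psqrt h) \<alpha> = (\<Sum>p\<in>dset \<alpha>. if fst p = 0 then ?g p else 0) + (\<Sum>p\<in>dset \<alpha>. if snd p = 0 then ?g p else 0)
     + (\<Sum>p\<in>dset \<alpha>. if fst p = 0 \<or> snd p = 0 then 0 else ?g p)"
    unfolding fps_mult_dset sum.distrib[symmetric]
  proof (rule sum.cong)
    fix p assume "p \<in> dset \<alpha>"
    then have "\<not> (fst p = 0 \<and> snd p = 0)" using False by (auto simp: dset_def)
    then show "?g p = (if fst p = 0 then ?g p else 0) + (if snd p = 0 then ?g p else 0) + (if fst p = 0 \<or> snd p = 0 then 0 else ?g p)"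
      by auto
  qed simp
  also have "\<dots> = 2 * psqrt h 0 * psqrt h \<alpha> + (\<Sum>p\<in>dset \<alpha>. if fst p = 0 \<or> snd p = 0 then 0 else ?g p)"
    by (simp add: sum_dset_fst0 sum_dset_snd0)
  also have "\<dots> = h \<alpha>"
    using assms False by (subst (2) psqrt.simps) (simp add: psqrt.simps[of h 0])
  finally show ?thesis .
qed

definition psq :: "ps \<Rightarrow> ps" where "psq a = Abs_ps (psqrt (Rep_ps a))"
definition pinvp :: "ps \<Rightarrow> ps" where "pinvp a = Abs_ps (pinv (Rep_ps a))"

lemma psq_sq: "ev a > 0 \<Longrightarrow> psq a * psq a = a"
  by (rule Rep_ps_inject[THEN iffD1]) (auto simp: Rep_mult psq_def Abs_ps_inverse psqrt_works ev_def)

lemma pinvp_inv: "ev a \<noteq> 0 \<Longrightarrow> a * pinvp a = 1"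
  by (rule Rep_ps_inject[THEN iffD1]) (auto simp: Rep_mult pinvp_def Abs_ps_inverse pinv_works ev_def Rep_one)

lemma sq_unit: "ev a > 0 \<Longrightarrow> \<exists>s u. s * s = a \<and> s * u = 1"
proof -
  assume a: "ev a > 0"
  have "ev (psq a) * ev (psq a) = ev a" using psq_sq[OF a] by (metis ev_mult)
  then have "ev (psq a) \<noteq> 0" using a by auto
  then show ?thesis using psq_sq[OF a] pinvp_inv by blast
qed

definition pd :: "nat \<Rightarrow> (nat \<Rightarrow> nat \<Rightarrow> real) \<Rightarrow> bool" where
  "pd d M \<longleftrightarrow> (\<forall>x. (\<exists>i<d. x i \<noteq> 0) \<longrightarrow> (\<Sum>i<d. \<Sum>j<d. x i * M i j * x j) > 0)"

definition quad :: "nat \<Rightarrow> (nat \<Rightarrow> nat \<Rightarrow> real) \<Rightarrow> (nat \<Rightarrow> real) \<Rightarrow> real" where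
  "quad d M x = (\<Sum>i<d. \<Sum>j<d. x i * M i j * x j)"

lemma quad_Suc:
  assumes sym: "\<forall>i<Suc d. \<forall>j<Suc d. C i j = C j i"
  shows "quad (Suc d) C x = quad d C x + 2 * x d * (\<Sum>i<d. x i * C i d) + C d d * (x d)^2"
proof -
  have "(\<Sum>j<d. x d * C d j * x j) = x d * (\<Sum>i<d. x i * C i d)"
    using sym by (auto simp: sum_distrib_left intro!: sum.cong)
  moreover have "(\<Sum>i<d. x i * C i d * x d) = x d * (\<Sum>i<d. x i * C i d)"
    by (auto simp: sum_distrib_left sum_distrib_right intro!: sum.cong)
  moreover have "quad (Suc d) C x = (\<Sum>i<d. \<Sum>j<d. x i * C i j * x j) + (\<Sum>i<d. x i * C i d * x d)
      + ((\<Sum>j<d. x d * C d j * x j) + x d * C d d * x d)"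
    by (simp add: quad_def sum.distrib)
  ultimately show ?thesis
    by (simp add: quad_def power2_eq_square)
qed

lemma schur_id:
  assumes sym: "\<forall>i<Suc d. \<forall>j<Suc d. C i j = C j i" and c: "C d d \<noteq> 0"
  shows "quad (Suc d) C x = quad d (\<lambda>i j. C i j - C i d * C d j / C d d) x
           + (C d d * x d + (\<Sum>i<d. x i * C i d))^2 / C d d"
proof -
  let ?a = "\<Sum>i<d. x i * C i d"
  have "quad d (\<lambda>i j. C i j - C i d * C d j / C d d) x = quad d C x - (\<Sum>i<d. \<Sum>j<d. (x i * C i d) * (x j * C j d)) / C d d"
  proof -
    have "\<forall>i<d. \<forall>j<d. x i * (C i j - C i d * C d j / C d d) * x j = x i * C i j * x j - (x i * C i d) * (x j * C j d) / C d d"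
      using sym by (auto simp: field_simps)
    then have "quad d (\<lambda>i j. C i j - C i d * C d j / C d d) x = (\<Sum>i<d. \<Sum>j<d. x i * C i j * x j - (x i * C i d) * (x j * C j d) / C d d)"
      unfolding quad_def by (auto intro!: sum.cong)
    also have "\<dots> = quad d C x - (\<Sum>i<d. \<Sum>j<d. (x i * C i d) * (x j * C j d)) / C d d"
      by (simp add: quad_def sum_subtractf sum_divide_distrib)
    finally show ?thesis .
  qed
  also have "(\<Sum>i<d. \<Sum>j<d. (x i * C i d) * (x j * C j d)) = ?a * ?a"
    by (simp add: sum_product)
  finally have "quad d (\<lambda>i j. C i j - C i d * C d j / C d d) x = quad d C x - ?a * ?a / C d d" .
  then show ?thesis using c
    by (simp add: quad_Suc[OF sym] power2_eq_square field_simps)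
qed

lemma schur_pd:
  assumes sym: "\<forall>i<Suc d. \<forall>j<Suc d. C i j = C j i" and p: "pd (Suc d) C"
  shows "C d d > 0" "pd d (\<lambda>i j. C i j - C i d * C d j / C d d)"
proof -
  have pq: "\<forall>x. (\<exists>i<Suc d. x i \<noteq> 0) \<longrightarrow> quad (Suc d) C x > 0"
    using p unfolding pd_def quad_def .
  have "\<exists>i<Suc d. (\<lambda>i. if i = d then 1 else (0::real)) i \<noteq> 0" by auto
  then have "quad (Suc d) C (\<lambda>i. if i = d then 1 else 0) > 0"
    by (rule pq[rule_format])
  moreover have "quad d C (\<lambda>i. if i = d then 1 else 0) = 0"
    unfolding quad_def by (intro sum.neutral ballI) auto
  moreover have "(\<Sum>i<d. (if i = d then 1 else 0) * C i d) = 0"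
    by (intro sum.neutral ballI) auto
  ultimately show c: "C d d > 0" unfolding quad_Suc[OF sym] by simp
  show "pd d (\<lambda>i j. C i j - C i d * C d j / C d d)"
    unfolding pd_def
  proof (intro allI impI)
    fix x :: "nat \<Rightarrow> real" assume ex: "\<exists>i<d. x i \<noteq> 0"
    define y where "y = x(d := - (\<Sum>i<d. x i * C i d) / C d d)"
    have yi: "\<And>i. i < d \<Longrightarrow> y i = x i" by (simp add: y_def)
    have "(\<Sum>i<d. y i * C i d) = (\<Sum>i<d. x i * C i d)" by (simp add: yi)
    then have z: "C d d * y d + (\<Sum>i<d. y i * C i d) = 0" using c by (simp add: y_def)
    obtain i0 where i0: "i0 < d" "x i0 \<noteq> 0" using ex by blast
    have "\<exists>i<Suc d. y i \<noteq> 0" using i0 yi[OF i0(1)] by (intro exI[of _ i0]) auto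
    then have "quad (Suc d) C y > 0" by (rule pq[rule_format])
    then have "quad d (\<lambda>i j. C i j - C i d * C d j / C d d) y > 0"
      using schur_id[OF sym, of y] c z by simp
    moreover have "quad d (\<lambda>i j. C i j - C i d * C d j / C d d) y = quad d (\<lambda>i j. C i j - C i d * C d j / C d d) x"
      unfolding quad_def by (simp add: yi)
    ultimately show "(\<Sum>i<d. \<Sum>j<d. x i * (C i j - C i d * C d j / C d d) * x j) > 0"
      by (simp add: quad_def)
  qed
qed

lemma chol:
  fixes evh :: "'a::comm_ring_1 \<Rightarrow> real"
  assumes hadd: "\<And>a b. evh (a + b) = evh a + evh b" and hmult: "\<And>a b. evh (a * b) = evh a * evh b"
    and hdiff: "\<And>a b. evh (a - b) = evh a - evh b" and hone: "evh 1 = 1"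
    and sq: "\<And>a. evh a > 0 \<Longrightarrow> \<exists>s u. s * s = a \<and> s * u = 1"
  shows "(\<forall>i<d. \<forall>j<d. Q i j = Q j i) \<Longrightarrow> pd d (\<lambda>i j. evh (Q i j)) \<Longrightarrow>
           \<exists>L. \<forall>i<d. \<forall>j<d. Q i j = (\<Sum>t<d. L t i * L t j)"
proof (induction d arbitrary: Q)
  case 0
  then show ?case by simp
next
  case (Suc d)
  let ?M = "\<lambda>i j. evh (Q i j)"
  have symQ: "\<forall>i<Suc d. \<forall>j<Suc d. Q i j = Q j i" using Suc.prems(1) .
  have symM: "\<forall>i<Suc d. \<forall>j<Suc d. ?M i j = ?M j i" using symQ by simp
  have cpos: "evh (Q d d) > 0" using schur_pd(1)[OF symM Suc.prems(2)] by simp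
  obtain s u where su: "s * s = Q d d" "s * u = 1" using sq[OF cpos] by blast
  have evs1: "evh s * evh s = evh (Q d d)" using hmult[of s s] su(1) by simp
  have evs2: "evh s * evh u = 1" using hmult[of s u] su(2) hone by simp
  have "evh (Q d d) * evh (u * u) = (evh s * evh u) * (evh s * evh u)"
    unfolding evs1[symmetric] hmult[of u u] by (simp add: ac_simps)
  then have "evh (Q d d) * evh (u * u) = 1" using evs2 by simp
  then have evuu: "evh (u * u) = 1 / evh (Q d d)" using cpos by (simp add: field_simps)
  have "Q d d * (u * u) = (s * u) * (s * u)" unfolding su(1)[symmetric] by (simp add: ac_simps)
  then have cu: "Q d d * (u * u) = 1" using su(2) by simp
  define S where "S i j = Q i j - Q i d * Q d j * (u * u)" for i j
  have symS: "\<forall>i<d. \<forall>j<d. S i j = S j i"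
    using symQ by (auto simp: S_def mult.commute)
  have "(\<lambda>i j. evh (S i j)) = (\<lambda>i j. ?M i j - ?M i d * ?M d j / ?M d d)"
    using evuu by (auto simp: S_def hdiff hmult)
  then have pdS: "pd d (\<lambda>i j. evh (S i j))" using schur_pd(2)[OF symM Suc.prems(2)] by simp
  obtain L' where L': "\<forall>i<d. \<forall>j<d. S i j = (\<Sum>t<d. L' t i * L' t j)"
    using Suc.IH[OF symS pdS] by blast
  define L where "L t i = (if t < d then (if i < d then L' t i else 0) else Q i d * u)" for t i
  show ?case
  proof (intro exI allI impI)
    fix i j assume i: "i < Suc d" and j: "j < Suc d"
    have "(\<Sum>t<Suc d. L t i * L t j) = (\<Sum>t<d. L t i * L t j) + L d i * L d j"
      by simp
    also have "L d i * L d j = Q i d * Q j d * (u * u)" by (simp add: L_def mult_ac)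
    finally have e: "(\<Sum>t<Suc d. L t i * L t j) = (\<Sum>t<d. L t i * L t j) + Q i d * Q j d * (u * u)" .
    have "(\<Sum>t<d. L t i * L t j) + Q i d * Q j d * (u * u) = Q i j"
    proof (cases "i < d \<and> j < d")
      case True
      have "(\<Sum>t<d. L t i * L t j) = S i j" using L' True by (simp add: L_def)
      then show ?thesis using symQ True by (simp add: S_def)
    next
      case False
      have z: "(\<Sum>t<d. L t i * L t j) = 0" using False by (auto simp: L_def intro!: sum.neutral)
      have "i = d \<or> j = d" using False i j by auto
      then show ?thesis
      proof
        assume id: "i = d"
        have "Q i d * Q j d * (u * u) = Q j d * (Q d d * (u * u))" using id by (simp add: mult_ac)
        then show ?thesis using z cu id symQ j by simp
      next
        assume jd: "j = d"
        have "Q i d * Q j d * (u * u) = Q i d * (Q d d * (u * u))" using jd by (simp add: mult_ac)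
        then show ?thesis using z cu jd by simp
      qed
    qed
    then show "Q i j = (\<Sum>t<Suc d. L t i * L t j)" using e by simp
  qed
qed

lemma pd_margin:
  "(\<forall>i<d. \<forall>j<d. C i j = C j i) \<Longrightarrow> pd d C \<Longrightarrow> \<exists>\<delta>>0. \<forall>x. quad d C x \<ge> \<delta> * (\<Sum>i<d. (x i)^2)"
proof (induction d arbitrary: C)
  case 0
  then show ?case by (intro exI[of _ 1]) (simp add: quad_def)
next
  case (Suc d)
  have symC: "\<forall>i<Suc d. \<forall>j<Suc d. C i j = C j i" using Suc.prems(1) .
  define c where "c = C d d"
  have c: "c > 0" using schur_pd(1)[OF symC Suc.prems(2)] by (simp add: c_def)
  define S where "S i j = C i j - C i d * C d j / C d d" for i j
  have symS: "\<forall>i<d. \<forall>j<d. S i j = S j i" using symC by (auto simp: S_def mult.commute)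
  have pdS: "pd d S" using schur_pd(2)[OF symC Suc.prems(2)] by (simp add: S_def[abs_def])
  obtain \<delta>' where d': "\<delta>' > 0" "\<forall>x. quad d S x \<ge> \<delta>' * (\<Sum>i<d. (x i)^2)"
    using Suc.IH[OF symS pdS] by blast
  define A where "A = (\<Sum>i<d. (C i d)^2)"
  have A0: "A \<ge> 0" by (simp add: A_def sum_nonneg)
  define \<delta> where "\<delta> = min (\<delta>' / (1 + 2 * A / c^2)) (c / 2)"
  have den: "1 + 2 * A / c^2 > 0" using A0 c by (simp add: add_pos_nonneg)
  have dpos: "\<delta> > 0" using d'(1) den c by (simp add: \<delta>_def)
  have dle1: "\<delta> * (1 + 2 * A / c^2) \<le> \<delta>'"
    using den by (simp add: \<delta>_def min_def divide_simps split: if_splits)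
  have dle2: "2 * \<delta> / c \<le> 1" using c by (simp add: \<delta>_def min_def divide_simps split: if_splits)
  show ?case
  proof (intro exI[of _ \<delta>] conjI allI)
    show "\<delta> > 0" by (rule dpos)
    fix x :: "nat \<Rightarrow> real"
    define a where "a = (\<Sum>i<d. x i * C i d)"
    define X where "X = (\<Sum>i<d. (x i)^2)"
    define T where "T = (c * x d + a)^2 / c"
    have X0: "X \<ge> 0" by (simp add: X_def sum_nonneg)
    have T0: "T \<ge> 0" using c by (simp add: T_def)
    have q: "quad (Suc d) C x = quad d S x + T"
      using schur_id[OF symC, of x] c by (simp add: S_def[abs_def] T_def a_def c_def)
    have q2: "quad (Suc d) C x \<ge> \<delta>' * X + T" using q d'(2) by (simp add: X_def)
    have cs: "a^2 \<le> X * A" unfolding a_def X_def A_def by (rule Cauchy_Schwarz_ineq_sum)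
    have "(c * x d)^2 \<le> 2 * (c * x d + a)^2 + 2 * a^2"
    proof -
      have "(c * x d)^2 = ((c * x d + a) - a)^2" by simp
      also have "\<dots> \<le> 2 * (c * x d + a)^2 + 2 * a^2"
        using sum_squares_ge_zero[of "(c * x d + a) + a" 0]
        by (simp add: power2_eq_square algebra_simps)
      finally show ?thesis .
    qed
    also have "(c * x d + a)^2 = c * T" using c by (simp add: T_def)
    finally have "c^2 * (x d)^2 \<le> 2 * c * T + 2 * (X * A)" using cs by (simp add: power_mult_distrib)
    then have xd: "(x d)^2 \<le> (2 * c * T + 2 * (X * A)) / c^2" using c by (simp add: field_simps)
    have "\<delta> * (\<Sum>i<Suc d. (x i)^2) = \<delta> * X + \<delta> * (x d)^2" by (simp add: X_def algebra_simps)
    also have "\<dots> \<le> \<delta> * X + \<delta> * ((2 * c * T + 2 * (X * A)) / c^2)"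
      using mult_left_mono[OF xd, of \<delta>] dpos by simp
    also have "\<dots> = (\<delta> * (1 + 2 * A / c^2)) * X + (2 * \<delta> / c) * T"
      using c by (simp add: field_simps power2_eq_square)
    also have "\<dots> \<le> \<delta>' * X + 1 * T"
      by (intro add_mono mult_right_mono dle1 dle2 X0 T0)
    also have "\<dots> \<le> quad (Suc d) C x" using q2 by simp
    finally show "\<delta> * (\<Sum>i<Suc d. (x i)^2) \<le> quad (Suc d) C x" .
  qed
qed

lemma keys_add_nat: "Poly_Mapping.keys ((\<beta>::mon) + \<gamma>) = Poly_Mapping.keys \<beta> \<union> Poly_Mapping.keys \<gamma>"
  by (auto simp: in_keys_iff lookup_add)

definition iv :: "nat \<Rightarrow> ps \<Rightarrow> bool" where "iv n a \<longleftrightarrow> in_vars n (Rep_ps a)"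

lemma iv_add: "iv n a \<Longrightarrow> iv n b \<Longrightarrow> iv n (a + b)"
  unfolding iv_def in_vars_def
proof (intro allI impI)
  fix \<alpha> assume A: "\<forall>\<alpha>. Rep_ps a \<alpha> \<noteq> 0 \<longrightarrow> Poly_Mapping.keys \<alpha> \<subseteq> {..<n}"
    and B: "\<forall>\<alpha>. Rep_ps b \<alpha> \<noteq> 0 \<longrightarrow> Poly_Mapping.keys \<alpha> \<subseteq> {..<n}" and "Rep_ps (a + b) \<alpha> \<noteq> 0"
  then have "Rep_ps a \<alpha> \<noteq> 0 \<or> Rep_ps b \<alpha> \<noteq> 0" by auto
  then show "Poly_Mapping.keys \<alpha> \<subseteq> {..<n}" using A B by blast
qed
lemma iv_diff: "iv n a \<Longrightarrow> iv n b \<Longrightarrow> iv n (a - b)"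
  unfolding iv_def in_vars_def
proof (intro allI impI)
  fix \<alpha> assume A: "\<forall>\<alpha>. Rep_ps a \<alpha> \<noteq> 0 \<longrightarrow> Poly_Mapping.keys \<alpha> \<subseteq> {..<n}"
    and B: "\<forall>\<alpha>. Rep_ps b \<alpha> \<noteq> 0 \<longrightarrow> Poly_Mapping.keys \<alpha> \<subseteq> {..<n}" and "Rep_ps (a - b) \<alpha> \<noteq> 0"
  then have "Rep_ps a \<alpha> \<noteq> 0 \<or> Rep_ps b \<alpha> \<noteq> 0" by auto
  then show "Poly_Mapping.keys \<alpha> \<subseteq> {..<n}" using A B by blast
qed
lemma iv_zero: "iv n 0" by (simp add: iv_def in_vars_def)
lemma iv_cst: "iv n (cst c)" by (simp add: iv_def in_vars_def Rep_cst)
lemma iv_one: "iv n 1" by (simp add: iv_def in_vars_def Rep_one)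
lemma iv_X: "k < n \<Longrightarrow> iv n (X k)" by (simp add: iv_def in_vars_def X_def Abs_ps_inverse var_def)
lemma iv_mult: "iv n a \<Longrightarrow> iv n b \<Longrightarrow> iv n (a * b)"
proof -
  assume a: "iv n a" and b: "iv n b"
  show "iv n (a * b)" unfolding iv_def in_vars_def
  proof (intro allI impI)
    fix \<alpha> assume "Rep_ps (a * b) \<alpha> \<noteq> 0"
    then obtain p where p: "p \<in> dset \<alpha>" "Rep_ps a (fst p) * Rep_ps b (snd p) \<noteq> 0"
      by (auto simp: Rep_mult fps_mult_dset elim: sum.not_neutral_contains_not_neutral)
    then have "Poly_Mapping.keys (fst p) \<subseteq> {..<n}" "Poly_Mapping.keys (snd p) \<subseteq> {..<n}"
      using a b by (auto simp: iv_def in_vars_def)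
    moreover have "\<alpha> = fst p + snd p" using p(1) by (auto simp: dset_def)
    ultimately show "Poly_Mapping.keys \<alpha> \<subseteq> {..<n}" by (simp add: keys_add_nat)
  qed
qed
lemma iv_sum: "(\<And>x. x \<in> S \<Longrightarrow> iv n (g x)) \<Longrightarrow> iv n (sum g S)"
  by (induction S rule: infinite_finite_induct) (auto intro: iv_add iv_zero)

definition R :: "nat \<Rightarrow> ps \<Rightarrow> ps" where
  "R n a = Abs_ps (\<lambda>\<alpha>. if Poly_Mapping.keys \<alpha> \<subseteq> {..<n} then Rep_ps a \<alpha> else 0)"

lemma Rep_R: "Rep_ps (R n a) \<alpha> = (if Poly_Mapping.keys \<alpha> \<subseteq> {..<n} then Rep_ps a \<alpha> else 0)"
  by (simp add: R_def Abs_ps_inverse)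

lemma R_add: "R n (a + b) = R n a + R n b"
  by (rule Rep_ps_inject[THEN iffD1]) (auto simp: Rep_R)
lemma R_zero: "R n 0 = 0"
  by (rule Rep_ps_inject[THEN iffD1]) (auto simp: Rep_R)
lemma R_sum: "R n (sum g S) = (\<Sum>x\<in>S. R n (g x))"
  by (induction S rule: infinite_finite_induct) (auto simp: R_add R_zero)
lemma R_id: "iv n a \<Longrightarrow> R n a = a"
  by (rule Rep_ps_inject[THEN iffD1]) (auto simp: Rep_R iv_def in_vars_def fun_eq_iff)
lemma iv_R: "iv n (R n a)"
  by (auto simp: iv_def in_vars_def Rep_R)
lemma R_mult: "R n (a * b) = R n a * R n b"
proof (rule Rep_ps_inject[THEN iffD1], rule ext)
  fix \<alpha>
  have l: "Rep_ps (R n (a * b)) \<alpha> = (if Poly_Mapping.keys \<alpha> \<subseteq> {..<n} then \<Sum>p\<in>dset \<alpha>. Rep_ps a (fst p) * Rep_ps b (snd p) else 0)"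
    by (simp add: Rep_R Rep_mult fps_mult_dset)
  have r: "Rep_ps (R n a * R n b) \<alpha> = (\<Sum>p\<in>dset \<alpha>. Rep_ps (R n a) (fst p) * Rep_ps (R n b) (snd p))"
    by (simp add: Rep_mult fps_mult_dset)
  show "Rep_ps (R n (a * b)) \<alpha> = Rep_ps (R n a * R n b) \<alpha>"
  proof (cases "Poly_Mapping.keys \<alpha> \<subseteq> {..<n}")
    case True
    then show ?thesis unfolding l r using True by (auto simp: Rep_R dset_def keys_add_nat intro!: sum.cong)
  next
    case False
    have "(\<Sum>p\<in>dset \<alpha>. Rep_ps (R n a) (fst p) * Rep_ps (R n b) (snd p)) = 0"
      using False by (intro sum.neutral ballI) (auto simp: Rep_R dset_def keys_add_nat)
    then show ?thesis unfolding l r using False by simp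
  qed
qed

definition sosP :: "ps \<Rightarrow> bool" where
  "sosP s \<longleftrightarrow> (\<exists>(K::nat) g. s = (\<Sum>k<K. g k * g k))"

definition QMH :: "nat \<Rightarrow> nat \<Rightarrow> ps set" where
  "QMH n d = {F. \<exists>(J::nat) s q. (\<forall>j<J. sosP (s j) \<and> Rep_ps (q j) \<in> QM n d \<and> iv n (q j)) \<and>
      F = (\<Sum>j<J. s j * q j)}"

lemma QMH_0: "0 \<in> QMH n d"
  unfolding QMH_def by (rule CollectI, rule exI[of _ 0]) simp

lemma QMH_gen: "sosP s \<Longrightarrow> Rep_ps q \<in> QM n d \<Longrightarrow> iv n q \<Longrightarrow> s * q \<in> QMH n d"
  unfolding QMH_def by (rule CollectI, rule exI[of _ 1], rule exI[of _ "\<lambda>_. s"], rule exI[of _ "\<lambda>_. q"]) simp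

lemma sum_split_add: "(\<Sum>j<(a::nat)+b. g j) = (\<Sum>j<a. g j) + (\<Sum>j<b. g (j + a))"
  by (induction b) (simp_all add: ac_simps)

lemma QMH_add: "F \<in> QMH n d \<Longrightarrow> G \<in> QMH n d \<Longrightarrow> F + G \<in> QMH n d"
proof -
  assume FQ: "F \<in> QMH n d" and GQ: "G \<in> QMH n d"
  from FQ obtain J1 :: nat and s1 q1 where
    1: "\<forall>j<J1. sosP (s1 j) \<and> Rep_ps (q1 j) \<in> QM n d \<and> iv n (q1 j)" "F = (\<Sum>j<J1. s1 j * q1 j)"
    unfolding QMH_def mem_Collect_eq by blast
  obtain J2 :: nat and s2 q2 where
    2: "\<forall>j<J2. sosP (s2 j) \<and> Rep_ps (q2 j) \<in> QM n d \<and> iv n (q2 j)" "G = (\<Sum>j<J2. s2 j * q2 j)"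
    using \<open>G \<in> QMH n d\<close> unfolding QMH_def mem_Collect_eq by blast
  define s where "s j = (if j < J1 then s1 j else s2 (j - J1))" for j
  define q where "q j = (if j < J1 then q1 j else q2 (j - J1))" for j
  have e0: "(\<Sum>j<J1 + J2. s j * q j) = (\<Sum>j<J1. s j * q j) + (\<Sum>j<J2. s (j + J1) * q (j + J1))"
    by (rule sum_split_add)
  have e1: "(\<Sum>j<J1. s j * q j) = F" using 1 by (simp add: s_def q_def)
  have e2: "(\<Sum>j<J2. s (j + J1) * q (j + J1)) = G" using 2 by (simp add: s_def q_def)
  have "F + G = (\<Sum>j<J1 + J2. s j * q j)" using e0 e1 e2 by simp
  moreover have "\<forall>j<J1 + J2. sosP (s j) \<and> Rep_ps (q j) \<in> QM n d \<and> iv n (q j)"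
    using 1 2 by (auto simp: s_def q_def)
  ultimately show ?thesis unfolding QMH_def by blast
qed

lemma QMH_sum: "(\<And>x. x \<in> S \<Longrightarrow> g x \<in> QMH n d) \<Longrightarrow> sum g S \<in> QMH n d"
  by (induction S rule: infinite_finite_induct) (auto intro: QMH_add QMH_0)

lemma sosP_ev: "ev s > 0 \<Longrightarrow> sosP s"
  unfolding sosP_def by (rule exI[of _ 1], rule exI[of _ "\<lambda>_. psq s"]) (simp add: psq_sq)

lemma sosP_sum: "sosP (\<Sum>k<(K::nat). g k * g k)"
  unfolding sosP_def by (rule exI[of _ K], rule exI[of _ g], rule refl)

lemma one_QM: "Rep_ps 1 \<in> QM n d"
proof -
  have ip: "is_poly n (Rep_ps 1)"
  proof -
    have "{\<alpha>. Rep_ps 1 \<alpha> \<noteq> 0} = {0}" by (auto simp: Rep_one)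
    then show ?thesis by (simp add: is_poly_def in_vars_def Rep_one)
  qed
  have "Rep_ps 1 = (\<lambda>\<alpha>. \<Sum>k<(1::nat). fps_mult (Rep_ps 1) (Rep_ps 1) \<alpha>)"
    by (simp add: Rep_mult[symmetric] fun_eq_iff)
  then have "sos_poly n (Rep_ps 1)" unfolding sos_poly_def using ip
    by (intro exI[of _ 1] exI[of _ "\<lambda>_. Rep_ps 1"]) simp
  then show ?thesis unfolding QM_def
    by (intro CollectI exI[of _ "Rep_ps 1"] exI[of _ 0]) simp
qed

lemma sosP_QMH: "sosP s \<Longrightarrow> s \<in> QMH n d"
  using QMH_gen[OF _ one_QM iv_one, of s n d] by simp

definition Vq :: "nat \<Rightarrow> nat \<Rightarrow> nat \<Rightarrow> ps" where "Vq d i j = X (vidx d i j)"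

definition qmv :: "nat \<Rightarrow> (nat \<Rightarrow> real) \<Rightarrow> ps" where
  "qmv d c = (\<Sum>i<d. \<Sum>j<d. cst (c i) * (Vq d i j * cst (c j)))"

lemma qmv_QM: "Rep_ps (qmv d c) \<in> QM n d"
proof -
  have ip: "is_poly n (Rep_ps (cst a))" for a
  proof -
    have "{\<alpha>. Rep_ps (cst a) \<alpha> \<noteq> 0} \<subseteq> {0}" by (auto simp: Rep_cst)
    then show ?thesis by (auto simp: is_poly_def in_vars_def Rep_cst intro: finite_subset)
  qed
  have s0: "sos_poly n (\<lambda>\<alpha>. 0)" unfolding sos_poly_def by (intro exI[of _ 0]) simp
  have "Rep_ps (qmv d c) = (\<lambda>\<alpha>. 0 + (\<Sum>t<(1::nat). \<Sum>i<d. \<Sum>j<d.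
           fps_mult (Rep_ps (cst (c i))) (fps_mult (Vmat d i j) (Rep_ps (cst (c j)))) \<alpha>))"
    by (simp add: fun_eq_iff qmv_def Rep_sum Rep_mult Vq_def X_def Abs_ps_inverse Vmat_def)
  then show ?thesis unfolding QM_def using s0 ip
    by (intro CollectI exI[of _ "\<lambda>\<alpha>. 0"] exI[of _ 1] exI[of _ "\<lambda>_ i. Rep_ps (cst (c i))"]) simp
qed

definition Tn :: "nat \<Rightarrow> nat \<Rightarrow> nat" where "Tn d i = (\<Sum>k<i. d - k)"

lemma Tn_Suc: "Tn d (Suc i) = Tn d i + (d - i)" by (simp add: Tn_def)
lemma Tn_mono: "i \<le> i' \<Longrightarrow> Tn d i \<le> Tn d i'"
  unfolding Tn_def by (rule sum_mono2) auto

lemma vidx_le: "i \<le> j \<Longrightarrow> vidx d i j = Tn d i + (j - i)" by (simp add: vidx_def Tn_def)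
lemma vidx_sym: "vidx d i j = vidx d j i" by (auto simp: vidx_def)

lemma sum_gauss2: "2 * (\<Sum>k<d. Suc k) = d * Suc d"
  by (induction d) auto

lemma Tn_d: "Tn d d = sigma d"
proof -
  have "Tn d d = (\<Sum>k<d. Suc (d - Suc k))"
    unfolding Tn_def by (rule sum.cong) auto
  also have "\<dots> = (\<Sum>k<d. Suc k)"
    by (rule sum.nat_diff_reindex)
  finally have "2 * Tn d d = d * Suc d" using sum_gauss2 by simp
  then show ?thesis unfolding sigma_def by simp
qed

lemma vidx_lt: "i < d \<Longrightarrow> j < d \<Longrightarrow> vidx d i j < sigma d"
proof -
  have *: "vidx d i j < sigma d" if "i \<le> j" "j < d" for i j
  proof -
    have "vidx d i j < Tn d (Suc i)" using that by (simp add: vidx_le Tn_Suc)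
    also have "\<dots> \<le> Tn d d" using that by (intro Tn_mono) simp
    finally show ?thesis by (simp add: Tn_d)
  qed
  assume "i < d" "j < d"
  then show ?thesis using *[of i j] *[of j i] vidx_sym[of d i j] by (cases "i \<le> j") auto
qed

definition Pd :: "nat \<Rightarrow> (nat \<times> nat) set" where "Pd d = {(i, j). i \<le> j \<and> j < d}"

lemma vidx_inj: "inj_on (\<lambda>(i, j). vidx d i j) (Pd d)"
proof -
  have less: "vidx d i j < vidx d i' j'" if "i < i'" "i \<le> j" "j < d" "i' \<le> j'" for i j i' j'
  proof -
    have "vidx d i j < Tn d (Suc i)" using that by (simp add: vidx_le Tn_Suc)
    also have "\<dots> \<le> Tn d i'" using that by (intro Tn_mono) simp
    also have "\<dots> \<le> vidx d i' j'" using that by (simp add: vidx_le)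
    finally show ?thesis .
  qed
  show ?thesis
  proof (rule inj_onI, clarify)
    fix i j i' j' assume a: "(i, j) \<in> Pd d" "(i', j') \<in> Pd d" "vidx d i j = vidx d i' j'"
    have "i = i'"
    proof (rule ccontr)
      assume "i \<noteq> i'"
      then have "i < i' \<or> i' < i" by auto
      then show False using less[of i i' j j'] less[of i' i j' j] a by (auto simp: Pd_def)
    qed
    then show "i = i' \<and> j = j'" using a by (auto simp: Pd_def vidx_le)
  qed
qed

lemma Pd_Suc: "Pd (Suc d) = Pd d \<union> (\<lambda>i. (i, d)) ` {..d}"
  by (auto simp: Pd_def)

lemma finite_Pd: "finite (Pd d)"
proof -
  have "Pd d \<subseteq> {..<d} \<times> {..<d}" by (auto simp: Pd_def)
  then show ?thesis by (rule finite_subset[OF _ finite_cartesian_product[OF finite_lessThan finite_lessThan]])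
qed

lemma card_Pd: "2 * card (Pd d) = d * Suc d"
proof (induction d)
  case 0
  then show ?case by (simp add: Pd_def)
next
  case (Suc d)
  have "card (Pd (Suc d)) = card (Pd d) + card ((\<lambda>i. (i, d)) ` {..d})"
    unfolding Pd_Suc by (rule card_Un_disjoint) (simp_all add: finite_Pd, auto simp: Pd_def)
  also have "card ((\<lambda>i. (i, d)) ` {..d}) = Suc d"
    by (subst card_image) (auto simp: inj_on_def)
  finally show ?case using Suc by simp
qed

lemma vidx_bij: "bij_betw (\<lambda>(i, j). vidx d i j) (Pd d) {..<sigma d}"
proof -
  have sub: "(\<lambda>(i, j). vidx d i j) ` Pd d \<subseteq> {..<sigma d}"
    by (auto simp: Pd_def intro!: vidx_lt)
  have "card ((\<lambda>(i, j). vidx d i j) ` Pd d) = card (Pd d)"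
    by (rule card_image[OF vidx_inj])
  also have "\<dots> = sigma d" using card_Pd[of d] by (simp add: sigma_def)
  finally have "(\<lambda>(i, j). vidx d i j) ` Pd d = {..<sigma d}"
    using sub by (intro card_subset_eq) auto
  then show ?thesis using vidx_inj by (simp add: bij_betw_def)
qed

lemma sum_Pd: "(\<Sum>p\<in>Pd d. G p) = (\<Sum>i<d. \<Sum>j<d. if i \<le> j then G (i, j) else 0)"
proof -
  have "(\<Sum>i<d. \<Sum>j<d. if i \<le> j then G (i, j) else 0) = (\<Sum>p\<in>{..<d} \<times> {..<d}. if fst p \<le> snd p then G p else 0)"
    by (simp add: sum.cartesian_product split_beta) (intro sum.cong refl, auto)
  also have "\<dots> = (\<Sum>p\<in>Pd d. if fst p \<le> snd p then G p else 0)"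
    by (rule sum.mono_neutral_right) (auto simp: Pd_def)
  also have "\<dots> = (\<Sum>p\<in>Pd d. G p)"
    by (rule sum.cong) (auto simp: Pd_def)
  finally show ?thesis by simp
qed

lemma sum_sym_half:
  fixes h :: "nat \<Rightarrow> nat \<Rightarrow> 'a::comm_ring_1"
  assumes sym: "\<And>i j. h i j = h j i"
  shows "(\<Sum>i<d. \<Sum>j<d. h i j) = (\<Sum>i<d. \<Sum>j<d. if i < j then 2 * h i j else if i = j then h i j else 0)"
proof -
  have split: "(\<Sum>i<d. \<Sum>j<d. h i j) = (\<Sum>i<d. \<Sum>j<d. if i < j then h i j else 0) + (\<Sum>i<d. \<Sum>j<d. if i = j then h i j else 0)
      + (\<Sum>i<d. \<Sum>j<d. if j < i then h i j else 0)"
  proof -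
    have "(\<Sum>i<d. \<Sum>j<d. h i j) = (\<Sum>i<d. \<Sum>j<d. (if i < j then h i j else 0) + (if i = j then h i j else 0) + (if j < i then h i j else 0))"
      by (intro sum.cong refl) auto
    then show ?thesis by (simp only: sum.distrib)
  qed
  have "(\<Sum>i<d. \<Sum>j<d. if j < i then h i j else 0) = (\<Sum>j<d. \<Sum>i<d. if j < i then h i j else 0)"
    by (rule sum.swap)
  also have "\<dots> = (\<Sum>i<d. \<Sum>j<d. if i < j then h i j else 0)"
    using sym by (intro sum.cong refl) auto
  finally have BA: "(\<Sum>i<d. \<Sum>j<d. if j < i then h i j else 0) = (\<Sum>i<d. \<Sum>j<d. if i < j then h i j else 0)" .
  have "(\<Sum>i<d. \<Sum>j<d. if i < j then 2 * h i j else if i = j then h i j else 0)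
      = (\<Sum>i<d. \<Sum>j<d. (if i < j then h i j else 0) + (if i = j then h i j else 0) + (if i < j then h i j else 0))"
  proof -
    have pt: "(if i < j then 2 * h i j else if i = j then h i j else 0) = (if i < j then h i j else 0) + (if i = j then h i j else 0) + (if i < j then h i j else 0)" for i j :: nat
    proof (cases "i < j")
      case True
      then have "i \<noteq> j" by simp
      then show ?thesis using True by simp
    qed simp
    show ?thesis by (simp only: pt)
  qed
  also have "\<dots> = (\<Sum>i<d. \<Sum>j<d. if i < j then h i j else 0) + (\<Sum>i<d. \<Sum>j<d. if i = j then h i j else 0)
      + (\<Sum>i<d. \<Sum>j<d. if i < j then h i j else 0)"
    by (simp only: sum.distrib)
  finally have calc: "(\<Sum>i<d. \<Sum>j<d. if i < j then 2 * h i j else if i = j then h i j else 0)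
      = (\<Sum>i<d. \<Sum>j<d. if i < j then h i j else 0) + (\<Sum>i<d. \<Sum>j<d. if i = j then h i j else 0)
      + (\<Sum>i<d. \<Sum>j<d. if i < j then h i j else 0)" .
  show ?thesis unfolding calc split BA ..
qed

lemma cst_of_nat: "cst (of_nat k) = of_nat k"
  by (induction k) (simp_all add: cst_add)

lemma cst_sum: "cst (sum g S) = (\<Sum>x\<in>S. cst (g x))"
  by (induction S rule: infinite_finite_induct) (simp_all add: cst_add)

lemma vpart_reindex:
  fixes g :: "nat \<Rightarrow> ps"
  shows "(\<Sum>i<d. \<Sum>j<d. cst (if i = j then 1 else 1/2) * g (vidx d i j)) = (\<Sum>k<sigma d. g k)"
proof -
  have "(\<Sum>i<d. \<Sum>j<d. cst (if i = j then 1 else 1/2) * g (vidx d i j))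
      = (\<Sum>i<d. \<Sum>j<d. if i < j then 2 * (cst (if i = j then 1 else 1/2) * g (vidx d i j))
           else if i = j then cst (if i = j then 1 else 1/2) * g (vidx d i j) else 0)"
    by (rule sum_sym_half) (simp add: vidx_sym eq_commute)
  also have "\<dots> = (\<Sum>i<d. \<Sum>j<d. if i \<le> j then g (vidx d i j) else 0)"
  proof (intro sum.cong refl)
    fix i j
    have c2: "cst 2 = 2" using cst_add[of 1 1] by (simp add: one_add_one)
    have "2 * cst (1/2) = cst 2 * cst (1/2)" by (simp add: c2)
    also have "\<dots> = cst (2 * (1/2))" by (simp only: cst_mult)
    also have "\<dots> = 1" by simp
    finally have "2 * cst (1/2) = (1::ps)" .
    then show "(if i < j then 2 * (cst (if i = j then 1 else 1/2) * g (vidx d i j))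
           else if i = j then cst (if i = j then 1 else 1/2) * g (vidx d i j) else 0) = (if i \<le> j then g (vidx d i j) else 0)"
      by (auto simp: mult.assoc[symmetric])
  qed
  also have "\<dots> = (\<Sum>p\<in>Pd d. g ((\<lambda>(i, j). vidx d i j) p))"
    by (subst sum_Pd) (simp only: prod.case)
  also have "\<dots> = (\<Sum>k<sigma d. g k)"
    by (rule sum.reindex_bij_betw[OF vidx_bij])
  finally show ?thesis .
qed

definition dec :: "ps \<Rightarrow> nat \<Rightarrow> ps" where
  "dec a k = Abs_ps (\<lambda>\<beta>. if (\<forall>i\<in>Poly_Mapping.keys \<beta>. k \<le> i) then Rep_ps a (\<beta> + e1 k) else 0)"

lemma Rep_dec: "Rep_ps (dec a k) \<beta> = (if (\<forall>i\<in>Poly_Mapping.keys \<beta>. k \<le> i) then Rep_ps a (\<beta> + e1 k) else 0)"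
  by (simp add: dec_def Abs_ps_inverse)

lemma ev_dec: "ev (dec a k) = Rep_ps a (e1 k)"
  by (simp add: ev_def Rep_dec)

lemma sub_add_e1: "Poly_Mapping.lookup \<alpha> k > 0 \<Longrightarrow> \<alpha> - e1 k + e1 k = \<alpha>"
  by (intro poly_mapping_eqI) (auto simp: lookup_add lookup_minus lookup_single when_def)

lemma sub_add_e1': "Poly_Mapping.lookup \<alpha> k > 0 \<Longrightarrow> \<alpha> - Poly_Mapping.single k (Suc 0) + Poly_Mapping.single k (Suc 0) = \<alpha>"
  by (intro poly_mapping_eqI) (auto simp: lookup_add lookup_minus lookup_single when_def)

lemma lookup_sub_e1': "Poly_Mapping.lookup (\<alpha> - Poly_Mapping.single k (Suc 0)) i = Poly_Mapping.lookup \<alpha> i - (if i = k then 1 else 0)"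
  by (simp add: lookup_minus lookup_single when_def)

lemma lookup_sub_e1: "Poly_Mapping.lookup (\<alpha> - e1 k) i = Poly_Mapping.lookup \<alpha> i - (if i = k then 1 else 0)"
  by (simp add: lookup_minus lookup_single when_def)

lemma min_key_char:
  assumes "\<alpha> \<noteq> 0"
  shows "(Poly_Mapping.lookup \<alpha> k > 0 \<and> (\<forall>i\<in>Poly_Mapping.keys (\<alpha> - e1 k). k \<le> i)) \<longleftrightarrow> k = Min (Poly_Mapping.keys \<alpha>)"
proof -
  have ne: "Poly_Mapping.keys \<alpha> \<noteq> {}" using assms by simp
  show ?thesis
  proof
    assume a: "Poly_Mapping.lookup \<alpha> k > 0 \<and> (\<forall>i\<in>Poly_Mapping.keys (\<alpha> - e1 k). k \<le> i)"
    then have kin: "k \<in> Poly_Mapping.keys \<alpha>" by (simp add: in_keys_iff)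
    have "\<forall>j\<in>Poly_Mapping.keys \<alpha>. k \<le> j"
    proof
      fix j assume j: "j \<in> Poly_Mapping.keys \<alpha>"
      show "k \<le> j"
      proof (cases "j = k")
        case False
        then have "j \<in> Poly_Mapping.keys (\<alpha> - e1 k)" using j by (simp add: in_keys_iff lookup_sub_e1 lookup_sub_e1')
        then show ?thesis using a by blast
      qed simp
    qed
    then show "k = Min (Poly_Mapping.keys \<alpha>)" using kin
      by (intro antisym[symmetric] Min_le) (auto intro!: Min.boundedI ne)
  next
    assume k: "k = Min (Poly_Mapping.keys \<alpha>)"
    then have kin: "k \<in> Poly_Mapping.keys \<alpha>" using ne by simp
    have "\<forall>i\<in>Poly_Mapping.keys (\<alpha> - e1 k). k \<le> i"
    proof
      fix i assume "i \<in> Poly_Mapping.keys (\<alpha> - e1 k)"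
      then have "i \<in> Poly_Mapping.keys \<alpha>" by (auto simp: in_keys_iff lookup_sub_e1 lookup_sub_e1' split: if_splits)
      then show "k \<le> i" using k by simp
    qed
    then show "Poly_Mapping.lookup \<alpha> k > 0 \<and> (\<forall>i\<in>Poly_Mapping.keys (\<alpha> - e1 k). k \<le> i)"
      using kin by (simp add: in_keys_iff)
  qed
qed

lemma dec_sum:
  assumes iv: "iv N a" and a0: "Rep_ps a 0 = 0"
  shows "a = (\<Sum>k<N. X k * dec a k)"
proof (rule Rep_ps_inject[THEN iffD1], rule ext)
  fix \<alpha>
  have "Rep_ps (\<Sum>k<N. X k * dec a k) \<alpha> = (\<Sum>k<N. if Poly_Mapping.lookup \<alpha> k > 0 \<and> (\<forall>i\<in>Poly_Mapping.keys (\<alpha> - e1 k). k \<le> i) then Rep_ps a \<alpha> else 0)"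
    by (simp add: Rep_sum Rep_X_mult Rep_dec sub_add_e1 cong: if_cong) (intro sum.cong refl, auto simp: sub_add_e1')
  also have "\<dots> = Rep_ps a \<alpha>"
  proof (cases "\<alpha> = 0")
    case True
    then show ?thesis using a0 by simp
  next
    case False
    let ?m = "Min (Poly_Mapping.keys \<alpha>)"
    have "(\<Sum>k<N. if Poly_Mapping.lookup \<alpha> k > 0 \<and> (\<forall>i\<in>Poly_Mapping.keys (\<alpha> - e1 k). k \<le> i) then Rep_ps a \<alpha> else 0)
        = (\<Sum>k<N. if k = ?m then Rep_ps a \<alpha> else 0)"
      using min_key_char[OF False] by (intro sum.cong refl) presburger
    also have "\<dots> = (if ?m < N then Rep_ps a \<alpha> else 0)" by (simp add: sum.delta')
    also have "\<dots> = Rep_ps a \<alpha>"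
    proof (cases "Rep_ps a \<alpha> = 0")
      case False
      then have "Poly_Mapping.keys \<alpha> \<subseteq> {..<N}" using iv by (auto simp: iv_def in_vars_def)
      moreover have "?m \<in> Poly_Mapping.keys \<alpha>" using \<open>\<alpha> \<noteq> 0\<close> by simp
      ultimately show ?thesis by auto
    qed simp
    finally show ?thesis .
  qed
  finally show "Rep_ps a \<alpha> = Rep_ps (\<Sum>k<N. X k * dec a k) \<alpha>" by simp
qed

lemma iv_dec: "iv N a \<Longrightarrow> iv N (dec a k)"
  unfolding iv_def in_vars_def
proof (intro allI impI)
  fix \<beta> assume A: "\<forall>\<alpha>. Rep_ps a \<alpha> \<noteq> 0 \<longrightarrow> Poly_Mapping.keys \<alpha> \<subseteq> {..<N}" and "Rep_ps (dec a k) \<beta> \<noteq> 0"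
  then have "Rep_ps a (\<beta> + e1 k) \<noteq> 0" by (simp add: Rep_dec split: if_splits)
  then have "Poly_Mapping.keys (\<beta> + e1 k) \<subseteq> {..<N}" using A by blast
  then show "Poly_Mapping.keys \<beta> \<subseteq> {..<N}" by (simp add: keys_add_nat)
qed

lemma dec_ge: "Rep_ps (dec a k) \<beta> \<noteq> 0 \<Longrightarrow> \<forall>i\<in>Poly_Mapping.keys \<beta>. k \<le> i"
  by (auto simp: Rep_dec split: if_splits)

lemma dec_dec_zero: "l < k \<Longrightarrow> dec (dec a k) l = 0"
proof (rule Rep_ps_inject[THEN iffD1], rule ext)
  fix \<beta> assume lk: "l < k"
  have "Rep_ps (dec a k) (\<beta> + e1 l) = 0"
  proof (rule ccontr)
    assume "Rep_ps (dec a k) (\<beta> + e1 l) \<noteq> 0"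
    then have "\<forall>i\<in>Poly_Mapping.keys (\<beta> + e1 l). k \<le> i" by (rule dec_ge)
    then show False using lk by (auto simp: keys_add_nat)
  qed
  then show "Rep_ps (dec (dec a k) l) \<beta> = Rep_ps 0 \<beta>" by (simp add: Rep_dec)
qed

lemma ev_dec_dec: "ev (dec (dec a k) l) = (if k \<le> l then Rep_ps a (e1 l + e1 k) else 0)"
  by (simp add: ev_dec Rep_dec)

lemma keys_e1e1: "Poly_Mapping.keys (e1 u + e1 v) = {u, v}"
  by (auto simp: keys_add_nat)

lemma mdeg1_char: "mdeg \<alpha> = 1 \<Longrightarrow> \<exists>l. \<alpha> = e1 l"
proof -
  assume a: "mdeg \<alpha> = 1"
  then have "\<alpha> \<noteq> 0" by (auto simp: mdeg_def)
  then have "Poly_Mapping.keys \<alpha> \<noteq> {}" by simp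
  then obtain l where l: "l \<in> Poly_Mapping.keys \<alpha>" by blast
  then have lp: "Poly_Mapping.lookup \<alpha> l > 0" by (simp add: in_keys_iff)
  have eq: "e1 l + (\<alpha> - e1 l) = \<alpha>" using sub_add_e1[OF lp] by (simp add: add.commute)
  have "mdeg \<alpha> = 1 + mdeg (\<alpha> - e1 l)" using mdeg_add[of "e1 l" "\<alpha> - e1 l"] unfolding eq by simp
  then have z: "\<alpha> - e1 l = 0" using a mdeg_0_iff by simp
  show ?thesis using eq unfolding z by (intro exI[of _ l]) simp
qed

lemma mdeg2_char: "mdeg \<alpha> = 2 \<Longrightarrow> \<exists>k l. k \<le> l \<and> \<alpha> = e1 k + e1 l"
proof -
  assume a: "mdeg \<alpha> = 2"
  then have "\<alpha> \<noteq> 0" by (auto simp: mdeg_def)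
  define k where "k = Min (Poly_Mapping.keys \<alpha>)"
  have kin: "k \<in> Poly_Mapping.keys \<alpha>" using \<open>\<alpha> \<noteq> 0\<close> by (simp add: k_def)
  then have lp: "Poly_Mapping.lookup \<alpha> k > 0" by (simp add: in_keys_iff)
  have eq: "e1 k + (\<alpha> - e1 k) = \<alpha>" using sub_add_e1[OF lp] by (simp add: add.commute)
  have "mdeg \<alpha> = 1 + mdeg (\<alpha> - e1 k)" using mdeg_add[of "e1 k" "\<alpha> - e1 k"] unfolding eq by simp
  then have "mdeg (\<alpha> - e1 k) = 1" using a by simp
  then obtain l where l: "\<alpha> - e1 k = e1 l" using mdeg1_char by blast
  have eq2: "e1 k + e1 l = \<alpha>" using eq unfolding l .
  have "l \<in> Poly_Mapping.keys (e1 k + e1 l)" unfolding keys_e1e1 by simp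
  then have "l \<in> Poly_Mapping.keys \<alpha>" unfolding eq2 .
  then have "k \<le> l" by (simp add: k_def)
  then show ?thesis using eq2 by (intro exI[of _ k] exI[of _ l]) simp
qed

definition monom :: "(nat \<Rightarrow> real) \<Rightarrow> mon \<Rightarrow> real" where
  "monom y \<alpha> = (\<Prod>i\<in>Poly_Mapping.keys \<alpha>. y i ^ Poly_Mapping.lookup \<alpha> i)"

lemma monom_e1e1: "monom y (e1 u + e1 v) = y u * y v"
proof (cases "u = v")
  case True
  have "e1 v + e1 v = Poly_Mapping.single v 2" by (simp add: single_add[symmetric] numeral_2_eq_2)
  then show ?thesis using True by (simp add: monom_def power2_eq_square)
next
  case False
  then show ?thesis by (simp add: monom_def keys_e1e1 lookup_add lookup_single)
qed

lemma e1e1_inj: "u \<le> v \<Longrightarrow> u' \<le> v' \<Longrightarrow> e1 u + e1 v = e1 u' + e1 v' \<Longrightarrow> u = u' \<and> v = v'"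
proof -
  assume a: "u \<le> v" "u' \<le> v'" "e1 u + e1 v = e1 u' + e1 v'"
  then have "{u, v} = {u', v'}" by (metis keys_e1e1)
  then show ?thesis using a(1,2) by (auto simp: doubleton_eq_iff)
qed

lemma peval_hp2:
  fixes f :: fps and x :: "nat \<Rightarrow> real" and \<sigma> n :: nat
  assumes ivf: "in_vars n f" and sn: "\<sigma> \<le> n"
  shows "peval (hom_part 2 f) (\<lambda>k. if \<sigma> \<le> k \<and> k < n then x (k - \<sigma>) else 0) =
         (\<Sum>a<n - \<sigma>. \<Sum>b<n - \<sigma>. if a \<le> b then f (e1 (\<sigma> + a) + e1 (\<sigma> + b)) * x a * x b else 0)"
proof -
  define M where "M = n - \<sigma>"
  define xt where "xt = (\<lambda>k. if \<sigma> \<le> k \<and> k < n then x (k - \<sigma>) else 0)"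
  define p where "p = hom_part 2 f"
  define S where "S = {\<alpha>. p \<alpha> \<noteq> 0}"
  define phi where "phi = (\<lambda>(a, b). e1 (\<sigma> + a) + e1 (\<sigma> + b))"
  define PP where "PP = Pd M"
  have Schar: "\<alpha> \<in> S \<Longrightarrow> \<exists>k l. k \<le> l \<and> l < n \<and> \<alpha> = e1 k + e1 l \<and> f \<alpha> \<noteq> 0" for \<alpha>
  proof -
    assume "\<alpha> \<in> S"
    then have m2: "mdeg \<alpha> = 2" and fa: "f \<alpha> \<noteq> 0" by (auto simp: S_def p_def hom_part_def split: if_splits)
    then obtain k l where kl: "k \<le> l" "\<alpha> = e1 k + e1 l" using mdeg2_char by blast
    have "Poly_Mapping.keys \<alpha> \<subseteq> {..<n}" using ivf fa by (simp add: in_vars_def)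
    then have "l < n" using kl keys_e1e1[of k l] by auto
    then show ?thesis using kl fa by blast
  qed
  have finS: "finite S"
  proof -
    have "S \<subseteq> (\<lambda>(k, l). e1 k + e1 l) ` Pd n"
      using Schar by (force simp: Pd_def)
    then show ?thesis using finite_Pd finite_subset by blast
  qed
  have finP: "finite (phi ` PP)" by (simp add: PP_def finite_Pd)
  have injphi: "inj_on phi PP"
  proof (rule inj_onI, clarify)
    fix a b a' b' assume A: "(a, b) \<in> PP" "(a', b') \<in> PP" "phi (a, b) = phi (a', b')"
    have "\<sigma> + a = \<sigma> + a' \<and> \<sigma> + b = \<sigma> + b'"
      using A by (intro e1e1_inj) (auto simp: phi_def PP_def Pd_def)
    then show "a = a' \<and> b = b'" by simp
  qed
  have "peval p xt = (\<Sum>\<alpha>\<in>S. p \<alpha> * monom xt \<alpha>)" by (simp add: peval_def S_def monom_def)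
  also have "\<dots> = (\<Sum>\<alpha>\<in>S \<union> phi ` PP. p \<alpha> * monom xt \<alpha>)"
    by (rule sum.mono_neutral_left) (use finS finP in \<open>auto simp: S_def\<close>)
  also have "\<dots> = (\<Sum>\<alpha>\<in>phi ` PP. p \<alpha> * monom xt \<alpha>)"
  proof (rule sum.mono_neutral_right)
    show "finite (S \<union> phi ` PP)" using finS finP by simp
    show "phi ` PP \<subseteq> S \<union> phi ` PP" by auto
    show "\<forall>\<alpha>\<in>S \<union> phi ` PP - phi ` PP. p \<alpha> * monom xt \<alpha> = 0"
    proof
      fix \<alpha> assume "\<alpha> \<in> S \<union> phi ` PP - phi ` PP"
      then have aS: "\<alpha> \<in> S" and nP: "\<alpha> \<notin> phi ` PP" by auto
      obtain k l where kl: "k \<le> l" "l < n" "\<alpha> = e1 k + e1 l" using Schar[OF aS] by blast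
      have "k < \<sigma>"
      proof (rule ccontr)
        assume "\<not> k < \<sigma>"
        then have "(k - \<sigma>, l - \<sigma>) \<in> PP" "\<alpha> = phi (k - \<sigma>, l - \<sigma>)"
          using kl by (auto simp: PP_def Pd_def M_def phi_def)
        then show False using nP by blast
      qed
      then have "monom xt \<alpha> = 0" using kl by (simp add: monom_e1e1 xt_def)
      then show "p \<alpha> * monom xt \<alpha> = 0" by simp
    qed
  qed
  also have "\<dots> = (\<Sum>q\<in>PP. p (phi q) * monom xt (phi q))"
    by (simp add: sum.reindex[OF injphi])
  also have "\<dots> = (\<Sum>q\<in>PP. f (e1 (\<sigma> + fst q) + e1 (\<sigma> + snd q)) * x (fst q) * x (snd q))"
  proof (rule sum.cong[OF refl])
    fix q assume "q \<in> PP"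
    then have "fst q < M" "snd q < M" by (auto simp: PP_def Pd_def)
    moreover have "mdeg (e1 (\<sigma> + fst q) + e1 (\<sigma> + snd q)) = 2" by (simp add: mdeg_add)
    ultimately show "p (phi q) * monom xt (phi q) = f (e1 (\<sigma> + fst q) + e1 (\<sigma> + snd q)) * x (fst q) * x (snd q)"
      by (auto simp: phi_def split_beta monom_e1e1 xt_def M_def p_def hom_part_def)
  qed
  also have "\<dots> = (\<Sum>a<M. \<Sum>b<M. if a \<le> b then f (e1 (\<sigma> + a) + e1 (\<sigma> + b)) * x a * x b else 0)"
    unfolding PP_def sum_Pd by (simp only: fst_conv snd_conv)
  finally show ?thesis by (simp add: p_def xt_def M_def)
qed

lemma QMH_hat:
  assumes FQ: "F \<in> QMH n d" and ivF: "iv n F"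
  shows "Rep_ps F \<in> QM_hat n d"
proof -
  obtain J :: nat and s q where J: "\<forall>j<J. sosP (s j) \<and> Rep_ps (q j) \<in> QM n d \<and> iv n (q j)" "F = (\<Sum>j<J. s j * q j)"
    using FQ unfolding QMH_def by blast
  have "R n F = (\<Sum>j<J. R n (s j) * R n (q j))"
    unfolding J(2) by (simp add: R_sum R_mult)
  also have "\<dots> = (\<Sum>j<J. R n (s j) * q j)"
    using J(1) by (intro sum.cong refl) (simp add: R_id)
  finally have Fe: "F = (\<Sum>j<J. R n (s j) * q j)" using R_id[OF ivF] by simp
  have sos: "sos_fps n (Rep_ps (R n (s j)))" if j: "j < J" for j
  proof -
    obtain K :: nat and g where g: "s j = (\<Sum>k<K. g k * g k)" using J(1) j unfolding sosP_def by blast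
    have "R n (s j) = (\<Sum>k<K. R n (g k) * R n (g k))" by (simp add: g R_sum R_mult)
    then have "Rep_ps (R n (s j)) = (\<lambda>\<alpha>. \<Sum>k<K. fps_mult (Rep_ps (R n (g k))) (Rep_ps (R n (g k))) \<alpha>)"
      by (simp add: fun_eq_iff Rep_sum Rep_mult)
    moreover have "\<forall>k<K. in_vars n (Rep_ps (R n (g k)))" using iv_R by (simp add: iv_def)
    ultimately show ?thesis unfolding sos_fps_def
      by (intro exI[of _ K] exI[of _ "\<lambda>k. Rep_ps (R n (g k))"]) simp
  qed
  have "Rep_ps F = (\<lambda>\<alpha>. \<Sum>j<J. fps_mult (Rep_ps (R n (s j))) (Rep_ps (q j)) \<alpha>)"
    by (subst Fe) (simp add: fun_eq_iff Rep_sum Rep_mult)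
  then show ?thesis unfolding QM_hat_def using sos J(1)
    by (intro CollectI exI[of _ J] exI[of _ "\<lambda>j. Rep_ps (R n (s j))"] exI[of _ "\<lambda>j. Rep_ps (q j)"]) simp
qed

lemma vidx_eq_iff:
  assumes "a < d" "b < d" "i < d" "j < d"
  shows "vidx d a b = vidx d i j \<longleftrightarrow> (a = i \<and> b = j) \<or> (a = j \<and> b = i)"
proof
  have m: "vidx d x y = vidx d (min x y) (max x y)" for x y
    by (cases "x \<le> y") (simp_all add: min_def max_def vidx_sym[of d x y])
  assume e: "vidx d a b = vidx d i j"
  have P1: "(min a b, max a b) \<in> Pd d" and P2: "(min i j, max i j) \<in> Pd d" using assms by (auto simp: Pd_def)
  have "vidx d (min a b) (max a b) = vidx d a b" by (rule m[symmetric])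
  also have "\<dots> = vidx d i j" by (rule e)
  also have "\<dots> = vidx d (min i j) (max i j)" by (rule m)
  finally have "(\<lambda>(i, j). vidx d i j) (min a b, max a b) = (\<lambda>(i, j). vidx d i j) (min i j, max i j)"
    by simp
  then have "(min a b, max a b) = (min i j, max i j)" by (rule inj_onD[OF vidx_inj _ P1 P2])
  then show "(a = i \<and> b = j) \<or> (a = j \<and> b = i)" by (auto simp: min_def max_def split: if_splits)
next
  assume "(a = i \<and> b = j) \<or> (a = j \<and> b = i)"
  then show "vidx d a b = vidx d i j" by (elim disjE conjE) (simp_all add: vidx_sym[of d j i])
qed

lemma e1_inj: "e1 k = e1 m \<Longrightarrow> k = m"
proof -
  assume "e1 k = e1 m"
  then have "Poly_Mapping.lookup (e1 k) k = Poly_Mapping.lookup (e1 m) k" by simp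
  then show "k = m" by (simp add: lookup_single when_def split: if_splits)
qed

lemma inner_CV_e1: "inner_CV d C (e1 k) = (\<Sum>a<d. \<Sum>b<d. if vidx d a b = k then C a b else 0)"
  unfolding inner_CV_def Vmat_def var_def by (intro sum.cong refl) (auto dest: e1_inj)

lemma double_delta:
  fixes C :: "nat \<Rightarrow> nat \<Rightarrow> 'a::comm_monoid_add"
  assumes "i < d" "j < d"
  shows "(\<Sum>a<d. \<Sum>b<d. if a = i \<and> b = j then C a b else 0) = C i j"
proof -
  have "(\<Sum>a<d. \<Sum>b<d. if a = i \<and> b = j then C a b else 0) = (\<Sum>a<d. if a = i then C a j else 0)"
    using assms by (intro sum.cong refl) (auto simp: sum.delta' if_distrib cong: if_cong)
  also have "\<dots> = C i j" using assms by (simp add: sum.delta')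
  finally show ?thesis .
qed

lemma inner_CV_vidx:
  assumes i: "i < d" and j: "j < d"
  shows "inner_CV d C (e1 (vidx d i j)) = (if i = j then C i i else C i j + C j i)"
proof -
  have "inner_CV d C (e1 (vidx d i j)) = (\<Sum>a<d. \<Sum>b<d. if (a = i \<and> b = j) \<or> (a = j \<and> b = i) then C a b else 0)"
    unfolding inner_CV_e1 using i j by (intro sum.cong refl) (simp add: vidx_eq_iff)
  also have "\<dots> = (if i = j then C i i else C i j + C j i)"
  proof (cases "i = j")
    case True
    then show ?thesis using double_delta[OF i i, of C] by simp
  next
    case False
    have "(\<Sum>a<d. \<Sum>b<d. if (a = i \<and> b = j) \<or> (a = j \<and> b = i) then C a b else 0)
        = (\<Sum>a<d. \<Sum>b<d. (if a = i \<and> b = j then C a b else 0) + (if a = j \<and> b = i then C a b else 0))"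
      using False by (intro sum.cong refl) auto
    also have "\<dots> = C i j + C j i" using double_delta[OF i j, of C] double_delta[OF j i, of C]
      by (simp only: sum.distrib)
    finally show ?thesis using False by simp
  qed
  finally show ?thesis .
qed

lemma two_half: "2 * cst (1/2) = 1"
proof -
  have c2: "cst 2 = 2" using cst_add[of 1 1] by (simp add: one_add_one)
  have "2 * cst (1/2) = cst 2 * cst (1/2)" by (simp add: c2)
  also have "\<dots> = cst (2 * (1/2))" by (simp only: cst_mult)
  also have "\<dots> = 1" by simp
  finally show ?thesis .
qed

lemma four_quarter: "4 * cst (1/4) = 1"
proof -
  have c4: "cst 4 = 4" using cst_of_nat[of 4] by simp
  have "4 * cst (1/4) = cst 4 * cst (1/4)" by (simp add: c4)
  also have "\<dots> = cst (4 * (1/4))" by (simp only: cst_mult)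
  also have "\<dots> = 1" by simp
  finally show ?thesis .
qed

lemma qmv_alt: "qmv d c = (\<Sum>i<d. \<Sum>j<d. cst (c i * c j) * Vq d i j)"
  unfolding qmv_def by (intro sum.cong refl) (simp add: cst_mult ac_simps)

lemma qmv_pm:
  assumes i: "i < d" and j: "j < d"
  shows "qmv d (\<lambda>a. (if a = i then 1 else 0) + s * (if a = j then 1 else 0))
       = Vq d i i + cst s * Vq d i j + cst s * Vq d j i + cst (s * s) * Vq d j j"
proof -
  let ?V = "Vq d"
  have "qmv d (\<lambda>a. (if a = i then 1 else 0) + s * (if a = j then 1 else 0))
      = (\<Sum>a<d. \<Sum>b<d. (if a = i \<and> b = i then ?V a b else 0) + (if a = i \<and> b = j then cst s * ?V a b else 0)
          + (if a = j \<and> b = i then cst s * ?V a b else 0) + (if a = j \<and> b = j then cst (s * s) * ?V a b else 0))"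
    unfolding qmv_alt by (intro sum.cong refl) (auto simp: algebra_simps cst_add cst_mult)
  also have "\<dots> = ?V i i + cst s * ?V i j + cst s * ?V j i + cst (s * s) * ?V j j"
    using double_delta[OF i i, of ?V] double_delta[OF i j, of "\<lambda>a b. cst s * ?V a b"]
      double_delta[OF j i, of "\<lambda>a b. cst s * ?V a b"] double_delta[OF j j, of "\<lambda>a b. cst (s * s) * ?V a b"]
    by (simp only: sum.distrib)
  finally show ?thesis .
qed

lemma Vq_sym: "Vq d i j = Vq d j i" by (simp add: Vq_def vidx_sym)

lemma iv_qmv: "sigma d \<le> n \<Longrightarrow> iv n (qmv d c)"
  unfolding qmv_def Vq_def
  by (intro iv_sum iv_mult iv_cst iv_X) (auto intro: less_le_trans[OF vidx_lt])

lemma qmv_QMH: "sigma d \<le> n \<Longrightarrow> ev s > 0 \<Longrightarrow> s * qmv d c \<in> QMH n d"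
  by (intro QMH_gen sosP_ev qmv_QM iv_qmv)

lemma sym_half_ps:
  fixes Y :: "nat \<Rightarrow> ps" and G :: "nat \<Rightarrow> nat \<Rightarrow> ps"
  shows "(\<Sum>a<M. \<Sum>b<M. Y a * Y b * (cst (1/2) * (G a b + G b a))) = (\<Sum>a<M. \<Sum>b<M. Y a * Y b * G a b)"
proof -
  let ?S1 = "\<Sum>a<M. \<Sum>b<M. Y a * Y b * G a b"
  let ?S2 = "\<Sum>a<M. \<Sum>b<M. Y a * Y b * G b a"
  have "(\<Sum>a<M. \<Sum>b<M. Y a * Y b * (cst (1/2) * (G a b + G b a)))
      = (\<Sum>a<M. \<Sum>b<M. cst (1/2) * (Y a * Y b * G a b) + cst (1/2) * (Y a * Y b * G b a))"
    by (intro sum.cong refl) (simp add: algebra_simps)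
  also have "\<dots> = cst (1/2) * ?S1 + cst (1/2) * ?S2"
    by (simp only: sum.distrib sum_distrib_left)
  also have "?S2 = (\<Sum>b<M. \<Sum>a<M. Y a * Y b * G b a)" by (rule sum.swap)
  also have "\<dots> = ?S1" by (intro sum.cong refl) (simp add: ac_simps)
  also have "cst (1/2) * ?S1 + cst (1/2) * ?S1 = (2 * cst (1/2)) * ?S1" by (simp add: algebra_simps)
  also have "\<dots> = ?S1" by (simp add: two_half)
  finally show ?thesis .
qed

lemma sym_half_real:
  fixes x :: "nat \<Rightarrow> real" and g :: "nat \<Rightarrow> nat \<Rightarrow> real"
  shows "(\<Sum>a<M. \<Sum>b<M. x a * ((g a b + g b a) / 2) * x b) = (\<Sum>a<M. \<Sum>b<M. x a * g a b * x b)"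
proof -
  let ?S1 = "\<Sum>a<M. \<Sum>b<M. x a * g a b * x b"
  let ?S2 = "\<Sum>a<M. \<Sum>b<M. x a * g b a * x b"
  have "(\<Sum>a<M. \<Sum>b<M. x a * ((g a b + g b a) / 2) * x b)
      = (\<Sum>a<M. \<Sum>b<M. (x a * g a b * x b) / 2 + (x a * g b a * x b) / 2)"
    by (intro sum.cong refl) (simp add: algebra_simps add_divide_distrib)
  also have "\<dots> = ?S1 / 2 + ?S2 / 2"
    by (simp only: sum.distrib sum_divide_distrib)
  also have "?S2 = (\<Sum>b<M. \<Sum>a<M. x a * g b a * x b)" by (rule sum.swap)
  also have "\<dots> = ?S1" by (intro sum.cong refl) (simp add: ac_simps)
  finally show ?thesis by simp
qed

lemma sos_from_chol:
  fixes Y :: "nat \<Rightarrow> ps" and L :: "nat \<Rightarrow> nat \<Rightarrow> ps"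
  assumes "\<forall>k<M. \<forall>l<M. Q k l = (\<Sum>t<M. L t k * L t l)"
  shows "(\<Sum>k<M. \<Sum>l<M. Y k * Y l * Q k l) = (\<Sum>t<M. (\<Sum>k<M. L t k * Y k) * (\<Sum>k<M. L t k * Y k))"
proof -
  have "(\<Sum>t<M. (\<Sum>k<M. L t k * Y k) * (\<Sum>k<M. L t k * Y k)) = (\<Sum>t<M. \<Sum>k<M. \<Sum>l<M. (L t k * Y k) * (L t l * Y l))"
    by (simp only: sum_product)
  also have "\<dots> = (\<Sum>k<M. \<Sum>t<M. \<Sum>l<M. (L t k * Y k) * (L t l * Y l))" by (rule sum.swap)
  also have "\<dots> = (\<Sum>k<M. \<Sum>l<M. \<Sum>t<M. (L t k * Y k) * (L t l * Y l))" by (intro sum.cong refl sum.swap)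
  also have "\<dots> = (\<Sum>k<M. \<Sum>l<M. Y k * Y l * (\<Sum>t<M. L t k * L t l))"
    by (intro sum.cong refl) (simp add: sum_distrib_left ac_simps)
  also have "\<dots> = (\<Sum>k<M. \<Sum>l<M. Y k * Y l * Q k l)" using assms by (intro sum.cong refl) simp
  finally show ?thesis by simp
qed

lemma gpart:
  fixes A :: ps and \<sigma> n d :: nat
  assumes ivf: "iv n A" and sn: "\<sigma> \<le> n"
    and lin0: "\<And>k. \<sigma> \<le> k \<Longrightarrow> k < n \<Longrightarrow> Rep_ps A (e1 k) = 0"
    and pdq: "\<And>x. (\<exists>i<n - \<sigma>. x i \<noteq> 0) \<Longrightarrow>
       (\<Sum>a<n - \<sigma>. \<Sum>b<n - \<sigma>. if a \<le> b then Rep_ps A (e1 (\<sigma> + a) + e1 (\<sigma> + b)) * x a * x b else 0) > 0"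
  shows "(\<Sum>k<n - \<sigma>. X (k + \<sigma>) * dec A (k + \<sigma>)) \<in> QMH n d"
proof -
  define M where "M = n - \<sigma>"
  have nM: "n = \<sigma> + M" using sn by (simp add: M_def)
  define G where "G k l = dec (dec A (k + \<sigma>)) (l + \<sigma>)" for k l
  define Y where "Y k = X (k + \<sigma>)" for k
  have Fk: "dec A (k + \<sigma>) = (\<Sum>l<M. X (l + \<sigma>) * G k l)" if k: "k < M" for k
  proof -
    have iv1: "iv n (dec A (k + \<sigma>))" by (rule iv_dec[OF ivf])
    have z: "Rep_ps (dec A (k + \<sigma>)) 0 = 0" using lin0[of "k + \<sigma>"] k by (simp add: Rep_dec M_def)
    have "dec A (k + \<sigma>) = (\<Sum>l<\<sigma> + M. X l * dec (dec A (k + \<sigma>)) l)"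
      using dec_sum[OF iv1 z] unfolding nM .
    also have "\<dots> = (\<Sum>l<\<sigma>. X l * dec (dec A (k + \<sigma>)) l) + (\<Sum>l<M. X (l + \<sigma>) * G k l)"
      by (simp add: sum_split_add G_def)
    also have "(\<Sum>l<\<sigma>. X l * dec (dec A (k + \<sigma>)) l) = 0"
      by (intro sum.neutral ballI) (simp add: dec_dec_zero)
    finally show ?thesis by simp
  qed
  define Q where "Q k l = cst (1/2) * (G k l + G l k)" for k l
  have "(\<Sum>k<M. X (k + \<sigma>) * dec A (k + \<sigma>)) = (\<Sum>k<M. \<Sum>l<M. Y k * Y l * G k l)"
    by (intro sum.cong refl) (simp add: Fk sum_distrib_left Y_def ac_simps)
  also have "\<dots> = (\<Sum>k<M. \<Sum>l<M. Y k * Y l * Q k l)" unfolding Q_def by (rule sym_half_ps[symmetric])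
  finally have part: "(\<Sum>k<M. X (k + \<sigma>) * dec A (k + \<sigma>)) = (\<Sum>k<M. \<Sum>l<M. Y k * Y l * Q k l)" .
  have symQ: "\<forall>k<M. \<forall>l<M. Q k l = Q l k" by (simp add: Q_def add.commute)
  have evG: "ev (G k l) = (if k \<le> l then Rep_ps A (e1 (\<sigma> + k) + e1 (\<sigma> + l)) else 0)" for k l
    by (simp add: G_def ev_dec_dec ac_simps)
  have pdQ: "pd M (\<lambda>k l. ev (Q k l))"
    unfolding pd_def
  proof (intro allI impI)
    fix x :: "nat \<Rightarrow> real" assume ex: "\<exists>i<M. x i \<noteq> 0"
    have "(\<Sum>k<M. \<Sum>l<M. x k * ev (Q k l) * x l) = (\<Sum>k<M. \<Sum>l<M. x k * ((ev (G k l) + ev (G l k)) / 2) * x l)"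
      by (simp add: Q_def)
    also have "\<dots> = (\<Sum>k<M. \<Sum>l<M. x k * ev (G k l) * x l)" by (rule sym_half_real)
    also have "\<dots> = (\<Sum>a<M. \<Sum>b<M. if a \<le> b then Rep_ps A (e1 (\<sigma> + a) + e1 (\<sigma> + b)) * x a * x b else 0)"
      by (intro sum.cong refl) (simp add: evG)
    also have "\<dots> > 0" using pdq[of x] ex by (simp add: M_def)
    finally show "(\<Sum>k<M. \<Sum>l<M. x k * ev (Q k l) * x l) > 0" .
  qed
  obtain L where L: "\<forall>k<M. \<forall>l<M. Q k l = (\<Sum>t<M. L t k * L t l)"
    using chol[of ev M Q, OF ev_add ev_mult ev_diff ev_one sq_unit symQ pdQ] by blast
  have "(\<Sum>k<M. X (k + \<sigma>) * dec A (k + \<sigma>)) = (\<Sum>t<M. (\<Sum>k<M. L t k * Y k) * (\<Sum>k<M. L t k * Y k))"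
    unfolding part by (rule sos_from_chol[OF L])
  then show ?thesis unfolding M_def[symmetric] by (simp add: sosP_QMH sosP_sum)
qed

lemma quad_shift:
  "quad d (\<lambda>i j. C i j - \<mu> * (if i = j then 1 else 0)) x = quad d C x - \<mu> * (\<Sum>i<d. (x i)^2)"
proof -
  have "quad d (\<lambda>i j. C i j - \<mu> * (if i = j then 1 else 0)) x
      = (\<Sum>i<d. \<Sum>j<d. x i * C i j * x j - (if i = j then \<mu> * (x i)^2 else 0))"
    unfolding quad_def by (intro sum.cong refl) (auto simp: algebra_simps power2_eq_square)
  also have "\<dots> = quad d C x - (\<Sum>i<d. \<Sum>j<d. if i = j then \<mu> * (x i)^2 else 0)"
    by (simp add: quad_def sum_subtractf)
  also have "(\<Sum>i<d. \<Sum>j<d. if i = j then \<mu> * (x i)^2 else 0) = \<mu> * (\<Sum>i<d. (x i)^2)"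
    by (simp add: sum_distrib_left)
  finally show ?thesis .
qed

lemma vpart:
  fixes A :: ps and C :: "nat \<Rightarrow> nat \<Rightarrow> real" and d n :: nat
  assumes pdC: "pos_def d C" and sn: "sigma d \<le> n"
    and lin: "\<And>i j. i < d \<Longrightarrow> j < d \<Longrightarrow> Rep_ps A (e1 (vidx d i j)) = inner_CV d C (e1 (vidx d i j))"
  shows "(\<Sum>k<sigma d. X k * dec A k) \<in> QMH n d"
proof -
  let ?V = "Vq d"
  have symC: "\<forall>i<d. \<forall>j<d. C i j = C j i" using pdC by (simp add: pos_def_def)
  have pdC': "pd d C" using pdC by (simp add: pos_def_def pd_def)
  define H where "H i j = cst (if i = j then 1 else 1/2) * dec A (vidx d i j)" for i j
  have step1: "(\<Sum>k<sigma d. X k * dec A k) = (\<Sum>i<d. \<Sum>j<d. H i j * ?V i j)"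
  proof -
    have "(\<Sum>i<d. \<Sum>j<d. cst (if i = j then 1 else 1/2) * (dec A (vidx d i j) * X (vidx d i j)))
        = (\<Sum>k<sigma d. dec A k * X k)" by (rule vpart_reindex)
    then show ?thesis by (simp add: H_def Vq_def ac_simps)
  qed
  have evH: "ev (H i j) = C i j" if "i < d" "j < d" for i j
    using that symC by (auto simp: H_def ev_dec lin inner_CV_vidx)
  define E where "E i j = H i j - cst (C i j)" for i j
  have evE: "ev (E i j) = 0" if "i < d" "j < d" for i j using evH[OF that] by (simp add: E_def)
  obtain \<delta> where \<delta>: "\<delta> > 0" "\<forall>x. quad d C x \<ge> \<delta> * (\<Sum>i<d. (x i)^2)"
    using pd_margin[OF symC pdC'] by blast
  define \<epsilon> where "\<epsilon> = \<delta> / (8 * (real d + 1))"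
  define \<mu> where "\<mu> = 4 * \<epsilon> * real d"
  have \<epsilon>0: "\<epsilon> > 0" using \<delta> by (simp add: \<epsilon>_def)
  have \<mu>\<delta>: "\<mu> < \<delta>"
  proof -
    have "\<mu> = \<delta> * (real d / (2 * (real d + 1)))" by (simp add: \<mu>_def \<epsilon>_def field_simps)
    also have "\<dots> < \<delta> * 1" using \<delta>(1) by (intro mult_strict_left_mono) (auto simp: field_simps)
    finally show ?thesis by simp
  qed
  define C' where "C' i j = C i j - \<mu> * (if i = j then 1 else 0)" for i j
  have symC': "\<forall>i<d. \<forall>j<d. C' i j = C' j i" using symC by (simp add: C'_def)
  have pdC'': "pd d C'"
    unfolding pd_def
  proof (intro allI impI)
    fix x :: "nat \<Rightarrow> real" assume "\<exists>i<d. x i \<noteq> 0"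
    then obtain i where i: "i < d" "x i \<noteq> 0" by blast
    have "(x i)^2 \<le> (\<Sum>i<d. (x i)^2)" using i by (intro member_le_sum) auto
    moreover have "(x i)^2 > 0" using i by simp
    ultimately have pos: "(\<Sum>i<d. (x i)^2) > 0" by linarith
    have "quad d C' x = quad d C x - \<mu> * (\<Sum>i<d. (x i)^2)" unfolding C'_def[abs_def] by (rule quad_shift)
    also have "\<dots> \<ge> (\<delta> - \<mu>) * (\<Sum>i<d. (x i)^2)" using \<delta>(2)[rule_format, of x] by (simp add: algebra_simps)
    finally have "quad d C' x \<ge> (\<delta> - \<mu>) * (\<Sum>i<d. (x i)^2)" .
    moreover have "(\<delta> - \<mu>) * (\<Sum>i<d. (x i)^2) > 0" using pos \<mu>\<delta> by simp
    ultimately show "(\<Sum>i<d. \<Sum>j<d. x i * C' i j * x j) > 0" unfolding quad_def by linarith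
  qed
  have sqr: "\<And>a::real. a > 0 \<Longrightarrow> \<exists>s u. s * s = a \<and> s * u = 1"
  proof -
    fix a :: real assume "a > 0"
    then show "\<exists>s u. s * s = a \<and> s * u = 1"
      by (intro exI[of _ "sqrt a"] exI[of _ "1 / sqrt a"]) simp
  qed
  obtain c where c: "\<forall>i<d. \<forall>j<d. C' i j = (\<Sum>t<d. c t i * c t j)"
    using chol[of "\<lambda>x::real. x" d C', OF _ _ _ _ sqr symC'] pdC'' by auto
  define w where "w = cst \<epsilon>"
  define c4 where "c4 = cst (1/4)"
  define \<alpha> where "\<alpha> i j = w + c4 * E i j" for i j
  define \<beta> where "\<beta> i j = w - c4 * E i j" for i j
  define up where "up i j = (\<lambda>a. (if a = i then 1 else 0) + 1 * (if a = j then (1::real) else 0))" for i j :: nat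
  define um where "um i j = (\<lambda>a. (if a = i then 1 else 0) + (-1) * (if a = j then (1::real) else 0))" for i j :: nat
  define T where "T = (\<Sum>i<d. \<Sum>j<d. \<alpha> i j * qmv d (up i j) + \<beta> i j * qmv d (um i j))"
  define DV where "DV = (\<Sum>i<d. ?V i i)"
  have Tterm: "\<alpha> i j * qmv d (up i j) + \<beta> i j * qmv d (um i j) = 2 * w * (?V i i + ?V j j) + E i j * ?V i j"
    if "i < d" "j < d" for i j
  proof -
    have p: "qmv d (up i j) = ?V i i + ?V i j + ?V i j + ?V j j"
      using qmv_pm[OF that, of 1] Vq_sym[of d j i] by (simp add: up_def)
    have m: "qmv d (um i j) = ?V i i - ?V i j - ?V i j + ?V j j"
      using qmv_pm[OF that, of "-1"] Vq_sym[of d j i] by (simp add: um_def cst_uminus)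
    have "\<alpha> i j * qmv d (up i j) + \<beta> i j * qmv d (um i j) = 2 * w * (?V i i + ?V j j) + (4 * c4) * E i j * ?V i j"
      unfolding p m \<alpha>_def \<beta>_def by (simp add: algebra_simps)
    then show ?thesis by (simp add: c4_def four_quarter)
  qed
  have Tval: "T = 4 * w * of_nat d * DV + (\<Sum>i<d. \<Sum>j<d. E i j * ?V i j)"
  proof -
    have "T = (\<Sum>i<d. \<Sum>j<d. 2 * w * ?V i i + 2 * w * ?V j j + E i j * ?V i j)"
      unfolding T_def by (intro sum.cong refl) (simp add: Tterm algebra_simps)
    also have "\<dots> = (\<Sum>i<d. \<Sum>j<d. 2 * w * ?V i i) + (\<Sum>i<d. \<Sum>j<d. 2 * w * ?V j j) + (\<Sum>i<d. \<Sum>j<d. E i j * ?V i j)"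
      by (simp only: sum.distrib)
    also have "(\<Sum>i<d. \<Sum>j<d. 2 * w * ?V i i) = 2 * w * of_nat d * DV"
      by (simp add: DV_def sum_distrib_left ac_simps)
    also have "(\<Sum>i<d. \<Sum>j<d. 2 * w * ?V j j) = 2 * w * of_nat d * DV"
      by (simp add: DV_def sum_distrib_left ac_simps)
    finally show ?thesis by (simp add: algebra_simps)
  qed
  have Cval: "(\<Sum>t<d. qmv d (c t)) = (\<Sum>i<d. \<Sum>j<d. cst (C i j) * ?V i j) - cst \<mu> * DV"
  proof -
    have "(\<Sum>t<d. qmv d (c t)) = (\<Sum>t<d. \<Sum>i<d. \<Sum>j<d. cst (c t i * c t j) * ?V i j)"
      by (simp add: qmv_alt)
    also have "\<dots> = (\<Sum>i<d. \<Sum>t<d. \<Sum>j<d. cst (c t i * c t j) * ?V i j)" by (rule sum.swap)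
    also have "\<dots> = (\<Sum>i<d. \<Sum>j<d. \<Sum>t<d. cst (c t i * c t j) * ?V i j)" by (intro sum.cong refl sum.swap)
    also have "\<dots> = (\<Sum>i<d. \<Sum>j<d. cst (C' i j) * ?V i j)"
      using c by (intro sum.cong refl) (simp add: cst_sum sum_distrib_right)
    also have "\<dots> = (\<Sum>i<d. \<Sum>j<d. cst (C i j) * ?V i j - (if i = j then cst \<mu> * ?V i j else 0))"
      by (intro sum.cong refl) (simp add: C'_def cst_diff cst_mult algebra_simps)
    also have "\<dots> = (\<Sum>i<d. \<Sum>j<d. cst (C i j) * ?V i j) - cst \<mu> * DV"
      by (simp add: sum_subtractf DV_def sum_distrib_left)
    finally show ?thesis .
  qed
  have cmu: "cst \<mu> = 4 * w * of_nat d"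
  proof -
    have c4': "cst 4 = 4" using cst_of_nat[of 4] by simp
    show ?thesis unfolding \<mu>_def w_def by (simp add: cst_mult c4' cst_of_nat[symmetric])
  qed
  have "(\<Sum>k<sigma d. X k * dec A k) = (\<Sum>i<d. \<Sum>j<d. cst (C i j) * ?V i j) + (\<Sum>i<d. \<Sum>j<d. E i j * ?V i j)"
    unfolding step1 by (simp add: E_def algebra_simps sum.distrib[symmetric])
  also have "\<dots> = (\<Sum>t<d. qmv d (c t)) + T"
    using Cval Tval cmu by (simp add: algebra_simps)
  finally have eq: "(\<Sum>k<sigma d. X k * dec A k) = (\<Sum>t<d. qmv d (c t)) + T" .
  have m1: "(\<Sum>t<d. qmv d (c t)) \<in> QMH n d"
    by (rule QMH_sum) (use qmv_QMH[OF sn, of 1] in simp)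
  have m2: "T \<in> QMH n d"
    unfolding T_def
  proof (intro QMH_sum QMH_add)
    fix i j assume "i \<in> {..<d}" "j \<in> {..<d}"
    then have ij: "i < d" "j < d" by auto
    have "ev (\<alpha> i j) > 0" "ev (\<beta> i j) > 0" using evE[OF ij] \<epsilon>0 by (simp_all add: \<alpha>_def \<beta>_def w_def)
    then show "\<alpha> i j * qmv d (up i j) \<in> QMH n d" "\<beta> i j * qmv d (um i j) \<in> QMH n d"
      by (simp_all add: qmv_QMH[OF sn])
  qed
  show ?thesis unfolding eq by (rule QMH_add[OF m1 m2])
qed

theorem lemma4p3:
  fixes m r n :: nat and C :: "nat \<Rightarrow> nat \<Rightarrow> real" and f :: fps
  assumes "0 < m" and "r \<le> n" and "sigma (m - r) \<le> n"
    and "in_vars n f"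
    and "pos_def (m - r) C"
    and "f 0 = 0"
    and "hom_part 1 f = inner_CV (m - r) C"
    and "\<forall>x::nat \<Rightarrow> real. (\<forall>k<sigma (m - r). x k = 0) \<longrightarrow> (\<exists>k\<in>{sigma (m - r)..<n}. x k \<noteq> 0)
            \<longrightarrow> peval (hom_part 2 f) x > 0"
  shows "f \<in> QM_hat n (m - r)"
proof -
  define d where "d = m - r"
  define \<sigma> where "\<sigma> = sigma d"
  define A where "A = Abs_ps f"
  have RA: "Rep_ps A = f" by (simp add: A_def Abs_ps_inverse)
  have sn: "\<sigma> \<le> n" using assms(3) by (simp add: \<sigma>_def d_def)
  have ivA: "iv n A" using assms(4) by (simp add: iv_def RA)
  have A0: "Rep_ps A 0 = 0" using assms(6) by (simp add: RA)
  have fe1: "Rep_ps A (e1 k) = inner_CV d C (e1 k)" for k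
  proof -
    have "Rep_ps A (e1 k) = hom_part 1 f (e1 k)" by (simp add: RA hom_part_def)
    then show ?thesis using assms(7) by (simp add: d_def)
  qed
  have lin0: "Rep_ps A (e1 k) = 0" if "\<sigma> \<le> k" for k
  proof -
    have "Rep_ps A (e1 k) = (\<Sum>a<d. \<Sum>b<d. if vidx d a b = k then C a b else 0)"
      by (simp add: fe1 inner_CV_e1)
    also have "\<dots> = 0"
      using that vidx_lt[of _ d] by (intro sum.neutral ballI) (force simp: \<sigma>_def)
    finally show ?thesis .
  qed
  have pdq: "(\<Sum>a<n - \<sigma>. \<Sum>b<n - \<sigma>. if a \<le> b then Rep_ps A (e1 (\<sigma> + a) + e1 (\<sigma> + b)) * x a * x b else 0) > 0"
    if ex: "\<exists>i<n - \<sigma>. x i \<noteq> 0" for x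
  proof -
    define xt where "xt = (\<lambda>k. if \<sigma> \<le> k \<and> k < n then x (k - \<sigma>) else 0)"
    obtain i where i: "i < n - \<sigma>" "x i \<noteq> 0" using ex by blast
    have "\<forall>k<sigma (m - r). xt k = 0" by (simp add: xt_def \<sigma>_def d_def)
    moreover have "\<exists>k\<in>{sigma (m - r)..<n}. xt k \<noteq> 0"
      using i by (intro bexI[of _ "\<sigma> + i"]) (auto simp: xt_def \<sigma>_def d_def)
    ultimately have "peval (hom_part 2 f) xt > 0" using assms(8) by blast
    then show ?thesis unfolding xt_def peval_hp2[OF assms(4) sn] RA .
  qed
  have "A = (\<Sum>k<\<sigma> + (n - \<sigma>). X k * dec A k)" using dec_sum[OF ivA A0] sn by simp
  also have "\<dots> = (\<Sum>k<\<sigma>. X k * dec A k) + (\<Sum>k<n - \<sigma>. X (k + \<sigma>) * dec A (k + \<sigma>))"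
    by (rule sum_split_add)
  finally have Adec: "A = (\<Sum>k<\<sigma>. X k * dec A k) + (\<Sum>k<n - \<sigma>. X (k + \<sigma>) * dec A (k + \<sigma>))" .
  have v: "(\<Sum>k<\<sigma>. X k * dec A k) \<in> QMH n d"
    unfolding \<sigma>_def by (rule vpart) (use assms(5) sn in \<open>simp_all add: d_def \<sigma>_def fe1\<close>)
  have g: "(\<Sum>k<n - \<sigma>. X (k + \<sigma>) * dec A (k + \<sigma>)) \<in> QMH n d"
    by (rule gpart[OF ivA sn lin0 pdq]) auto
  have "A \<in> QMH n d" by (subst Adec) (rule QMH_add[OF v g])
  then have "Rep_ps A \<in> QM_hat n d" by (rule QMH_hat[OF _ ivA])
  then show ?thesis by (simp add: RA d_def)
qed

end
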